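(* Let $d\ge 1$ and $0<p,q<\infty$. Let $\psi:[1,\infty)\to(0,\infty)$ be a decreasing function with $\lim_{t\to\infty}\psi(t)=0$, extended by $\psi(0):=\psi(1)$, such that $\psi^p$ satisfies the $\Delta_2$-condition: there is a constant $K>0$ with $\psi^p(t)\le K\,\psi^p(2t)$ for all $t\ge 1$. In the case $0<p<q$ assume in addition that there is $t_0\ge1$ such that for all $t>t_0$ the function $\psi^p$ is convex and $$\frac{t\,|\psi'(t)|}{\psi(t)}\ \ge\ K_0\ >\ \beta:=d\Big(\frac1p-\frac1q\Big)$$ for some constant $K_0$, where $\psi'(t):=\psi'(t+)$ is the right derivative. Then for every $r\in[1,\infty]$, $$e_n\big(\mathcal{F}^{\psi}_{q,r}\big)_{\mathcal{S}^p}\asymp \psi\big(n^{1/d}\big)\, n^{\frac1p-\frac1q},\qquad n\in\mathbb{N},$$ i.e. there exist constants $C_1,C_2>0$ independent of $n$ such that $C_1\psi(n^{1/d})n^{1/p-1/q}\le e_n(\mathcal{F}^{\psi}_{q,r})_{\mathcal{S}^p}\le C_2\psi(n^{1/d})n^{1/p-1/q}$ for all $n\in\mathbb{N}$.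
   Context: $\mathbb{T}^d=[0,2\pi)^d$, and $L(\mathbb{T}^d)$ is the set of functions $2\pi$-periodic in each variable and Lebesgue integrable on $\mathbb{T}^d$ (functions equal a.e. identified). For $f\in L(\mathbb{T}^d)$ and $\mathbf{k}\in\mathbb{Z}^d$, $\widehat f(\mathbf{k})=(2\pi)^{-d}\int_{\mathbb{T}^d}f(\mathbf{x})e^{-i(\mathbf{k},\mathbf{x})}\,d\mathbf{x}$, where $(\mathbf{k},\mathbf{x})=k_1x_1+\dots+k_dx_d$. For $0<p<\infty$, $\mathcal{S}^p$ is the space of $f\in L(\mathbb{T}^d)$ with finite (quasi-)norm $\|f\|_{\mathcal{S}^p}=\big(\sum_{\mathbf{k}\in\mathbb{Z}^d}|\widehat f(\mathbf{k})|^p\big)^{1/p}$. For $0<r\le\infty$ and $\mathbf{k}\in\mathbb{Z}^d$, $|\mathbf{k}|_r=(\sum_{j=1}^d|k_j|^r)^{1/r}$ if $r<\infty$ and $|\mathbf{k}|_\infty=\max_j|k_j|$. The class $\mathcal{F}^{\psi}_{q,r}=\{f\in L(\mathbb{T}^d):\ \big(\sum_{\mathbf{k}\in\mathbb{Z}^d}|\widehat f(\mathbf{k})/\psi(|\mathbf{k}|_r)|^q\big)^{1/q}\le 1\}$. For $n\in\mathbb{N}$ and a set $\mathfrak{N}\subset\mathcal{S}^p$, the best $n$-term trigonometric approximation is $e_n(\mathfrak{N})_{\mathcal{S}^p}=\sup_{f\in\mathfrak{N}}\inf_{\gamma_n}\inf_{c_{\mathbf{k}}\in\mathbb{C}}\big\|f-\sum_{\mathbf{k}\in\gamma_n}c_{\mathbf{k}}e^{i(\mathbf{k},\cdot)}\big\|_{\mathcal{S}^p}$,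 where $\gamma_n$ ranges over all sets of $n$ distinct vectors of $\mathbb{Z}^d$. *)

theory Defs
  imports "HOL-Analysis.Analysis"
begin

text \<open>Frequencies k in Z^d are modelled as int^'d, points of T^d as real^'d,
  where the dimension d = CARD('d) is a type parameter (d >= 1 automatically).\<close>

definition ipr :: "int^'d \<Rightarrow> real^'d \<Rightarrow> real" where
  "ipr k x = (\<Sum>j\<in>UNIV. of_int (k$j) * x$j)"

definition torus :: "(real^'d) set" where
  "torus = cbox 0 (\<chi> j. 2*pi)"

definition Lper :: "(real^'d \<Rightarrow> complex) \<Rightarrow> bool" where
  "Lper f \<longleftrightarrow> (\<forall>x j. f (x + axis j (2*pi)) = f x) \<and> f absolutely_integrable_on torus"

definition fourier_coeff :: "(real^'d \<Rightarrow> complex) \<Rightarrow> int^'d \<Rightarrow> complex" where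
  "fourier_coeff f k = complex_of_real (1 / (2*pi) ^ CARD('d)) *
      integral torus (\<lambda>x. f x * exp (- \<i> * complex_of_real (ipr k x)))"

definition knorm :: "ereal \<Rightarrow> int^'d \<Rightarrow> real" where
  "knorm r k = (if r = \<infinity> then Max ((\<lambda>j. real_of_int \<bar>k$j\<bar>) ` UNIV)
       else (\<Sum>j\<in>UNIV. real_of_int \<bar>k$j\<bar> powr real_of_ereal r) powr (1 / real_of_ereal r))"

definition psiext :: "(real \<Rightarrow> real) \<Rightarrow> real \<Rightarrow> real" where
  "psiext \<psi> t = (if t = 0 then \<psi> 1 else \<psi> t)"

definition Sp_norm :: "real \<Rightarrow> (real^'d \<Rightarrow> complex) \<Rightarrow> ereal" where
  "Sp_norm p f = (if (\<lambda>k. norm (fourier_coeff f k) powr p) summable_on UNIV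
      then ereal ((\<Sum>\<^sub>\<infinity>k. norm (fourier_coeff f k) powr p) powr (1/p)) else \<infinity>)"

definition Fclass :: "(real \<Rightarrow> real) \<Rightarrow> real \<Rightarrow> ereal \<Rightarrow> (real^'d \<Rightarrow> complex) set" where
  "Fclass \<psi> q r = {f. Lper f \<and>
      (\<lambda>k. (norm (fourier_coeff f k) / psiext \<psi> (knorm r k)) powr q) summable_on UNIV \<and>
      (\<Sum>\<^sub>\<infinity>k. (norm (fourier_coeff f k) / psiext \<psi> (knorm r k)) powr q) powr (1/q) \<le> 1}"

definition trig_poly :: "(int^'d) set \<Rightarrow> (int^'d \<Rightarrow> complex) \<Rightarrow> real^'d \<Rightarrow> complex" where
  "trig_poly \<gamma> c x = (\<Sum>k\<in>\<gamma>. c k * exp (\<i> * complex_of_real (ipr k x)))"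

definition best_nterm :: "real \<Rightarrow> (real^'d \<Rightarrow> complex) set \<Rightarrow> nat \<Rightarrow> ereal" where
  "best_nterm p N n = (SUP f\<in>N. INF \<gamma>\<in>{\<gamma>. finite \<gamma> \<and> card \<gamma> = n}. INF c\<in>UNIV.
       Sp_norm p (\<lambda>x. f x - trig_poly \<gamma> c x))"

end

theory Submission
  imports Defs
begin


lemma ortho1:
  fixes a :: int
  shows "((\<lambda>t. exp (\<i> * (complex_of_int a * complex_of_real t))) has_integral
           (if a = 0 then complex_of_real (2*pi) else 0)) {0..2*pi}"
proof (cases "a = 0")
  case True
  then show ?thesis using has_integral_const_real[of "1::complex" 0 "2*pi"] by (simp add: scaleR_conv_of_real)
next
  case False
  define F where "F = (\<lambda>z::complex. exp (\<i> * of_int a * z) / (\<i> * of_int a))"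
  have d: "((\<lambda>t. F (of_real t)) has_vector_derivative exp (\<i> * (complex_of_int a * complex_of_real t))) (at t within {0..2*pi})" for t
  proof -
    have "(F has_field_derivative exp (\<i> * of_int a * of_real t)) (at (of_real t))"
      unfolding F_def using False
      by (auto intro!: derivative_eq_intros simp: field_simps)
    from has_vector_derivative_real_field[OF this] show ?thesis
      by (simp add: mult.assoc)
  qed
  have "((\<lambda>t. exp (\<i> * (complex_of_int a * complex_of_real t))) has_integral (F (of_real (2*pi)) - F (of_real 0))) {0..2*pi}"
    by (rule fundamental_theorem_of_calculus) (use d in auto)
  moreover have "exp (\<i> * of_int a * of_real (2*pi)) = 1"
    using exp_integer_2pi[of "of_int a"] by (simp add: mult_ac)
  ultimately show ?thesis using False by (simp add: F_def)
qed

lemma ind_if: fixes f :: "'a \<Rightarrow> 'b::real_vector" shows "(\<lambda>x. (indicator S x :: real) *\<^sub>R f x) = (\<lambda>x. if x \<in> S then f x else 0)"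
  by (rule ext) (simp add: indicator_def)

lemma ortho1_lborel:
  fixes a :: int
  shows "integrable lborel (\<lambda>t. indicator {0..2*pi} t *\<^sub>R exp (\<i> * (complex_of_int a * complex_of_real t)))"
    and "(\<integral>t. indicator {0..2*pi} t *\<^sub>R exp (\<i> * (complex_of_int a * complex_of_real t)) \<partial>lborel)
          = (if a = 0 then complex_of_real (2*pi) else 0)"
proof -
  have si: "set_integrable lborel {0..2*pi} (\<lambda>t. exp (\<i> * (complex_of_int a * complex_of_real t)))"
    by (rule borel_integrable_atLeastAtMost') (auto intro!: continuous_intros)
  then show i: "integrable lborel (\<lambda>t. indicator {0..2*pi} t *\<^sub>R exp (\<i> * (complex_of_int a * complex_of_real t)))"
    by (simp add: set_integrable_def)
  from has_integral_integral_lborel[OF i]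
  have "((\<lambda>t. if t \<in> {0..2*pi} then exp (\<i> * (complex_of_int a * complex_of_real t)) else 0) has_integral
     (\<integral>t. indicator {0..2*pi} t *\<^sub>R exp (\<i> * (complex_of_int a * complex_of_real t)) \<partial>lborel)) UNIV"
    by (simp only: ind_if)
  then have "((\<lambda>t. exp (\<i> * (complex_of_int a * complex_of_real t))) has_integral
     (\<integral>t. indicator {0..2*pi} t *\<^sub>R exp (\<i> * (complex_of_int a * complex_of_real t)) \<partial>lborel)) {0..2*pi}"
    by (rule has_integral_restrict_UNIV[THEN iffD1])
  then show "(\<integral>t. indicator {0..2*pi} t *\<^sub>R exp (\<i> * (complex_of_int a * complex_of_real t)) \<partial>lborel)
          = (if a = 0 then complex_of_real (2*pi) else 0)"
    using ortho1 has_integral_unique by blast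
qed

lemma Basis_cart_real: "(Basis :: (real^'d) set) = range (\<lambda>i. axis i 1)"
  by (auto simp: Basis_vec_def)

lemma prod_Basis_cart: "(\<Prod>b\<in>(Basis :: (real^'d) set). f b) = (\<Prod>i\<in>UNIV. f (axis i 1))"
  unfolding Basis_cart_real by (subst prod.reindex) (auto simp: inj_on_def axis_eq_axis)

lemma sum_Basis_cart: "(\<Sum>b\<in>(Basis :: (real^'d) set). f b) = (\<Sum>i\<in>UNIV. f (axis i 1))"
  unfolding Basis_cart_real by (subst sum.reindex) (auto simp: inj_on_def axis_eq_axis)

lemma ipr_axis: "ipr m (axis i 1) = of_int (m $ i)"
  unfolding ipr_def by (simp add: axis_def if_distrib cong: if_cong)

lemma ipr_Basis: "b \<in> Basis \<Longrightarrow> ipr m b = of_int (m $ axis_index b)"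
  by (metis axis_index ipr_axis)


lemma ortho:
  fixes m :: "int^'d"
  shows "integral (torus :: (real^'d) set) (\<lambda>x. exp (\<i> * complex_of_real (ipr m x)))
     = (if m = 0 then complex_of_real ((2*pi) ^ CARD('d)) else 0)"
proof -
  define H where "H = (\<lambda>(b::real^'d) t. indicator {0..2*pi} t *\<^sub>R exp (\<i> * (complex_of_int (m $ axis_index b) * complex_of_real t)))"
  define G where "G = (\<lambda>x::real^'d. \<Prod>b\<in>Basis. H b (x \<bullet> b))"
  have Hb: "H b \<in> borel_measurable lborel" for b
    using ortho1_lborel(1)[of "m $ axis_index b"] unfolding H_def by (simp add: borel_measurable_integrable)
  interpret P: product_sigma_finite "\<lambda>b::real^'d. lborel" by standard
  have T: "(\<lambda>f. \<Sum>b\<in>(Basis::(real^'d) set). f b *\<^sub>R b) \<in> measurable (\<Pi>\<^sub>M b\<in>Basis. lborel) borel"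
    by measurable
  have GT: "G (\<Sum>b\<in>Basis. f b *\<^sub>R b) = (\<Prod>b\<in>Basis. H b (f b))" for f
    unfolding G_def by (intro prod.cong refl) (simp add: inner_sum_left inner_Basis if_distrib cong: if_cong)
  have Gm: "G \<in> borel_measurable borel"
    unfolding G_def using Hb by measurable
  have intP: "integrable (\<Pi>\<^sub>M b\<in>Basis. lborel) (\<lambda>f. \<Prod>b\<in>(Basis::(real^'d) set). H b (f b))"
    by (rule P.product_integrable_prod) (auto simp: H_def ortho1_lborel(1))
  have intG: "integrable lborel G"
    by (subst lborel_eq, subst integrable_distr_eq[OF T Gm]) (simp add: GT intP)
  have valG: "integral\<^sup>L lborel G = (\<Prod>b\<in>(Basis::(real^'d) set). integral\<^sup>L lborel (H b))"
    by (subst lborel_eq, subst integral_distr[OF T Gm]) (simp only: GT, rule P.product_integral_prod, auto simp: H_def ortho1_lborel(1))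
  have Geq: "G = (\<lambda>x. if x \<in> torus then exp (\<i> * complex_of_real (ipr m x)) else 0)"
  proof
    fix x :: "real^'d"
    have "G x = (\<Prod>i\<in>UNIV. indicator {0..2*pi} (x$i) *\<^sub>R exp (\<i> * (complex_of_int (m $ i) * complex_of_real (x$i))))"
      unfolding G_def H_def prod_Basis_cart by (simp add: cart_eq_inner_axis)
    also have "\<dots> = (\<Prod>i\<in>UNIV. (indicator {0..2*pi} (x$i) :: real)) *\<^sub>R (\<Prod>i\<in>UNIV. exp (\<i> * (complex_of_int (m $ i) * complex_of_real (x$i))))"
      by (simp add: prod.distrib scaleR_conv_of_real)
    also have "(\<Prod>i\<in>UNIV. exp (\<i> * (complex_of_int (m $ i) * complex_of_real (x$i)))) = exp (\<i> * complex_of_real (ipr m x))"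
      by (simp add: ipr_def exp_sum[symmetric] sum_distrib_left)
    also have "(\<Prod>i\<in>UNIV. (indicator {0..2*pi} (x$i) :: real)) = indicator torus x"
      by (auto simp: indicator_def torus_def mem_box_cart prod_zero_iff)
    finally show "G x = (if x \<in> torus then exp (\<i> * complex_of_real (ipr m x)) else 0)"
      by (simp add: indicator_def)
  qed
  have "((\<lambda>x. exp (\<i> * complex_of_real (ipr m x))) has_integral integral\<^sup>L lborel G) torus"
    using has_integral_integral_lborel[OF intG] unfolding Geq[symmetric] by (simp add: has_integral_restrict_UNIV Geq)
  then have "integral torus (\<lambda>x. exp (\<i> * complex_of_real (ipr m x))) = (\<Prod>b\<in>(Basis::(real^'d) set). integral\<^sup>L lborel (H b))"
    using valG by (simp add: integral_unique)
  also have "\<dots> = (\<Prod>i\<in>UNIV. if m $ i = 0 then complex_of_real (2*pi) else 0)"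
    unfolding prod_Basis_cart H_def by (simp add: ortho1_lborel(2))
  also have "\<dots> = (if m = 0 then complex_of_real ((2*pi) ^ CARD('d)) else 0)"
  proof (cases "m = 0")
    case True then show ?thesis by simp
  next
    case False
    then obtain i where "m $ i \<noteq> 0" by (auto simp: vec_eq_iff)
    then show ?thesis using False by (auto simp: prod_zero_iff)
  qed
  finally show ?thesis .
qed

lemma ipr_diff: "ipr (l - k) x = ipr l x - ipr k x"
  unfolding ipr_def by (simp add: sum_subtractf left_diff_distrib)

lemma cont_exp_ipr: "continuous_on S (\<lambda>x::real^'d. exp (c * complex_of_real (ipr m x)))"
  unfolding ipr_def by (auto intro!: continuous_intros)

lemma cont_ipr: "continuous_on S (ipr k)"
  unfolding ipr_def[abs_def] by (auto intro!: continuous_intros)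

lemma torus_cbox: "(torus :: (real^'d) set) = cbox 0 (\<chi> j. 2*pi)"
  by (simp add: torus_def)

lemma int_exp_torus: "(\<lambda>x::real^'d. exp (c * complex_of_real (ipr m x))) integrable_on torus"
  unfolding torus_def by (rule integrable_continuous) (rule cont_exp_ipr)

lemma trig_poly_coeff_integral:
  fixes \<gamma> :: "(int^'d) set"
  assumes "finite \<gamma>"
  shows "integral torus (\<lambda>x. trig_poly \<gamma> c x * exp (- \<i> * complex_of_real (ipr k x)))
     = (if k \<in> \<gamma> then c k * complex_of_real ((2*pi) ^ CARD('d)) else 0)"
proof -
  have eq: "trig_poly \<gamma> c x * exp (- \<i> * complex_of_real (ipr k x)) =
        (\<Sum>l\<in>\<gamma>. c l * exp (\<i> * complex_of_real (ipr (l - k) x)))" for x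
    unfolding trig_poly_def sum_distrib_right ipr_diff
    by (intro sum.cong refl) (simp add: mult.assoc exp_add[symmetric] algebra_simps)
  have "integral torus (\<lambda>x. trig_poly \<gamma> c x * exp (- \<i> * complex_of_real (ipr k x)))
     = (\<Sum>l\<in>\<gamma>. c l * integral torus (\<lambda>x. exp (\<i> * complex_of_real (ipr (l - k) x))))"
    unfolding eq by (subst integral_sum) (auto intro!: integrable_on_mult_right int_exp_torus assms)
  also have "\<dots> = (\<Sum>l\<in>\<gamma>. if l = k then c l * complex_of_real ((2*pi) ^ CARD('d)) else 0)"
    by (intro sum.cong refl) (simp add: ortho)
  also have "\<dots> = (if k \<in> \<gamma> then c k * complex_of_real ((2*pi) ^ CARD('d)) else 0)"
    using assms by (simp add: sum.delta')
  finally show ?thesis .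
qed

lemma fourier_coeff_diff_trig:
  fixes f :: "real^'d \<Rightarrow> complex"
  assumes f: "f absolutely_integrable_on torus" and "finite \<gamma>"
  shows "fourier_coeff (\<lambda>x. f x - trig_poly \<gamma> c x) k = fourier_coeff f k - (if k \<in> \<gamma> then c k else 0)"
proof -
  have fi: "(\<lambda>x. f x * exp (- \<i> * complex_of_real (ipr k x))) integrable_on torus"
  proof -
    have "(\<lambda>x. exp (- \<i> * complex_of_real (ipr k x)) * f x) absolutely_integrable_on torus"
    proof (rule absolutely_integrable_bounded_measurable_product[OF bilinear_times _ _ _ f])
      show "(\<lambda>x. exp (- \<i> * complex_of_real (ipr k x))) \<in> borel_measurable (lebesgue_on torus)"
        by (rule continuous_imp_measurable_on_sets_lebesgue[OF cont_exp_ipr]) (simp add: torus_def)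
      show "torus \<in> sets lebesgue" by (simp add: torus_def)
      show "bounded ((\<lambda>x. exp (- \<i> * complex_of_real (ipr k x))) ` torus)"
        by (rule compact_imp_bounded, rule compact_continuous_image[OF cont_exp_ipr]) (simp add: torus_def)
    qed
    then show ?thesis by (simp add: mult.commute set_lebesgue_integral_eq_integral(1))
  qed
  have ti: "(\<lambda>x. trig_poly \<gamma> c x * exp (- \<i> * complex_of_real (ipr k x))) integrable_on torus"
    unfolding torus_def trig_poly_def by (rule integrable_continuous) (auto intro!: continuous_intros cont_exp_ipr cont_ipr)
  have "integral torus (\<lambda>x. (f x - trig_poly \<gamma> c x) * exp (- \<i> * complex_of_real (ipr k x)))
      = integral torus (\<lambda>x. f x * exp (- \<i> * complex_of_real (ipr k x)))
        - integral torus (\<lambda>x. trig_poly \<gamma> c x * exp (- \<i> * complex_of_real (ipr k x)))"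
    using integral_diff[OF fi ti] by (simp add: left_diff_distrib)
  note eqd = this
  show ?thesis
    unfolding fourier_coeff_def eqd trig_poly_coeff_integral[OF assms(2)]
    by (auto simp: right_diff_distrib)
qed

lemma fourier_coeff_trig:
  assumes "finite \<gamma>"
  shows "fourier_coeff (trig_poly \<gamma> c :: real^'d \<Rightarrow> complex) k = (if k \<in> \<gamma> then c k else 0)"
  unfolding fourier_coeff_def trig_poly_coeff_integral[OF assms] by auto

lemma ipr_shift: fixes k :: "int^'d" and x :: "real^'d" shows "ipr k (x + axis j (2*pi)) = ipr k x + of_int (k $ j) * (2*pi)"
proof -
  have "ipr k (x + axis j (2*pi)) = (\<Sum>i\<in>UNIV. of_int (k$i) * x$i) + (\<Sum>i\<in>UNIV. of_int (k$i) * (axis j (2*pi) :: real^'d) $ i)"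
    unfolding ipr_def by (simp add: distrib_left sum.distrib)
  also have "(\<Sum>i\<in>UNIV. of_int (k$i) * (axis j (2*pi) :: real^'d) $ i) = of_int (k $ j) * (2*pi)"
    by (simp add: axis_def if_distrib cong: if_cong)
  finally show ?thesis by (simp add: ipr_def)
qed

lemma Lper_trig: "finite \<gamma> \<Longrightarrow> Lper (trig_poly \<gamma> c :: real^'d \<Rightarrow> complex)"
proof -
  assume fin: "finite \<gamma>"
  have per: "trig_poly \<gamma> c (x + axis j (2*pi)) = trig_poly \<gamma> c x" for x :: "real^'d" and j
  proof -
    have "exp (\<i> * complex_of_real (ipr k (x + axis j (2*pi)))) = exp (\<i> * complex_of_real (ipr k x))" for k
    proof -
      have "exp (\<i> * complex_of_real (ipr k (x + axis j (2*pi)))) =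
            exp (\<i> * complex_of_real (ipr k x)) * exp ((2 * of_int (k $ j) * pi) * \<i>)"
        unfolding ipr_shift by (simp add: exp_add[symmetric] algebra_simps)
      also have "exp ((2 * of_int (k $ j) * pi) * \<i>) = 1"
        by (rule exp_integer_2pi) simp
      finally show ?thesis by simp
    qed
    then show ?thesis unfolding trig_poly_def by simp
  qed
  have "trig_poly \<gamma> c absolutely_integrable_on torus"
    unfolding torus_def trig_poly_def[abs_def]
    by (rule absolutely_integrable_continuous) (auto intro!: continuous_intros cont_ipr)
  then show ?thesis using per unfolding Lper_def by auto
qed



lemma fin_bound:
  fixes g :: "'a \<Rightarrow> real"
  assumes "\<And>x. x \<in> A \<Longrightarrow> 0 \<le> g x" "\<And>F. finite F \<Longrightarrow> F \<subseteq> A \<Longrightarrow> sum g F \<le> B"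
  shows "g summable_on A" "infsum g A \<le> B"
proof -
  show s: "g summable_on A"
    by (rule nonneg_bdd_above_summable_on) (use assms in \<open>auto simp: bdd_above_def\<close>)
  show "infsum g A \<le> B"
    by (rule infsum_le_finite_sums[OF s]) (use assms in auto)
qed

definition kinf :: "int^'d \<Rightarrow> real" where
  "kinf k = Max ((\<lambda>j. real_of_int \<bar>k$j\<bar>) ` UNIV)"

lemma kinf_ge: "real_of_int \<bar>k$j\<bar> \<le> kinf k"
  unfolding kinf_def by (rule Max_ge) auto

lemma kinf_nonneg: "0 \<le> kinf k"
  using kinf_ge[of k] by (meson abs_ge_zero of_int_0_le_iff order_trans)

lemma kinf_attained: "\<exists>j. kinf k = real_of_int \<bar>k$j\<bar>"
proof -
  have "kinf k \<in> (\<lambda>j. real_of_int \<bar>k$j\<bar>) ` UNIV"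
    unfolding kinf_def by (rule Max_in) auto
  then show ?thesis by auto
qed

lemma kinf_le: "(\<And>j. real_of_int \<bar>k$j\<bar> \<le> M) \<Longrightarrow> kinf k \<le> M"
  using kinf_attained[of k] by auto

lemma kinf_ge1: "k \<noteq> 0 \<Longrightarrow> 1 \<le> kinf k"
proof -
  assume "k \<noteq> 0"
  then obtain j where "k $ j \<noteq> 0" by (auto simp: vec_eq_iff)
  then have "1 \<le> real_of_int \<bar>k$j\<bar>" by linarith
  then show ?thesis using kinf_ge[of k j] by linarith
qed

lemma knorm_bounds:
  fixes k :: "int^'d"
  assumes r: "1 \<le> r"
  shows "kinf k \<le> knorm r k" "knorm r k \<le> real CARD('d) * kinf k"
proof -
  have "kinf k \<le> knorm r k \<and> knorm r k \<le> real CARD('d) * kinf k"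
  proof (cases "r = \<infinity>")
    case True
    then have "knorm r k = kinf k" by (simp add: knorm_def kinf_def)
    moreover have "kinf k \<le> real CARD('d) * kinf k"
    proof -
      have d1: "1 \<le> real CARD('d)" by (simp add: Suc_le_eq)
      show ?thesis using mult_right_mono[OF d1 kinf_nonneg[of k]] by simp
    qed
    ultimately show ?thesis by simp
  next
    case False
    define \<rho> where "\<rho> = real_of_ereal r"
    have r': "r = ereal \<rho>" using r False \<rho>_def by (cases r) auto
    have \<rho>1: "1 \<le> \<rho>" using r r' by simp
    define S where "S = (\<Sum>j\<in>UNIV. real_of_int \<bar>k$j\<bar> powr \<rho>)"
    have kn: "knorm r k = S powr (1/\<rho>)"
      using False by (simp add: knorm_def S_def \<rho>_def)
    obtain j0 where j0: "kinf k = real_of_int \<bar>k$j0\<bar>" using kinf_attained by blast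
    have "kinf k powr \<rho> \<le> S"
      unfolding S_def j0 by (rule member_le_sum) auto
    then have "(kinf k powr \<rho>) powr (1/\<rho>) \<le> S powr (1/\<rho>)"
      using \<rho>1 kinf_nonneg[of k] by (intro powr_mono2) auto
    then have lo: "kinf k \<le> knorm r k"
      using \<rho>1 kinf_nonneg[of k] by (simp add: kn powr_powr)
    have "S \<le> (\<Sum>j\<in>(UNIV::'d set). kinf k powr \<rho>)"
      unfolding S_def by (intro sum_mono powr_mono2) (use \<rho>1 kinf_ge in auto)
    also have "\<dots> = real CARD('d) * kinf k powr \<rho>" by simp
    finally have "S powr (1/\<rho>) \<le> (real CARD('d) * kinf k powr \<rho>) powr (1/\<rho>)"
      using \<rho>1 by (intro powr_mono2) (auto simp: S_def intro!: sum_nonneg)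
    also have "\<dots> = real CARD('d) powr (1/\<rho>) * kinf k"
      using \<rho>1 kinf_nonneg[of k] by (simp add: powr_mult powr_powr)
    also have "\<dots> \<le> real CARD('d) * kinf k"
    proof -
      have "real CARD('d) powr (1/\<rho>) \<le> real CARD('d) powr 1"
        using \<rho>1 by (intro powr_mono) (auto simp: Suc_le_eq)
      then show ?thesis using kinf_nonneg[of k] by (simp add: mult_right_mono)
    qed
    finally show ?thesis using lo kn by simp
  qed
  then show "kinf k \<le> knorm r k" "knorm r k \<le> real CARD('d) * kinf k" by auto
qed

definition cube :: "nat \<Rightarrow> (int^'d) set" where
  "cube M = {k. \<forall>j. \<bar>k$j\<bar> \<le> int M}"

lemma cube_card: "finite (cube M :: (int^'d) set) \<and> card (cube M :: (int^'d) set) = (2*M+1) ^ CARD('d)"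
proof -
  have b: "bij_betw vec_nth (cube M :: (int^'d) set) (Pi\<^sub>E UNIV (\<lambda>_. {-int M..int M}))"
  proof (rule bij_betwI')
    show "\<And>x y. x \<in> cube M \<Longrightarrow> y \<in> cube M \<Longrightarrow> (vec_nth x = vec_nth y) = (x = y)"
      by (simp add: vec_nth_inject)
    show "vec_nth x \<in> Pi\<^sub>E UNIV (\<lambda>_. {-int M..int M})" if "x \<in> cube M" for x
    proof -
      from that have h: "\<And>j. \<bar>x$j\<bar> \<le> int M" by (simp add: cube_def)
      have "\<And>j. -int M \<le> x$j \<and> x$j \<le> int M" using h by (metis abs_le_iff minus_le_iff)
      then show ?thesis by (auto simp: PiE_iff)
    qed
    show "\<exists>x\<in>cube M. y = vec_nth x" if "y \<in> Pi\<^sub>E UNIV (\<lambda>_. {-int M..int M})" for y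
    proof -
      have "\<And>j. y j \<in> {-int M..int M}" using that by (auto simp: PiE_iff)
      then have "\<And>j. -int M \<le> y j \<and> y j \<le> int M" by auto
      then have "\<And>j. \<bar>y j\<bar> \<le> int M" by (metis abs_le_iff minus_le_iff)
      then show ?thesis by (intro bexI[of _ "vec_lambda y"]) (auto simp: cube_def)
    qed
  qed
  have f: "finite (Pi\<^sub>E (UNIV::'d set) (\<lambda>_. {-int M..int M}))"
    by (rule finite_PiE) auto
  have c: "card (Pi\<^sub>E (UNIV::'d set) (\<lambda>_. {-int M..int M})) = (2*M+1) ^ CARD('d)"
    by (simp add: card_PiE) (simp add: nat_add_distrib nat_mult_distrib)
  show ?thesis using b f c bij_betw_finite bij_betw_same_card by metis
qed

lemma cube_kinf: "k \<in> cube M \<Longrightarrow> kinf k \<le> real M"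
proof (intro kinf_le)
  fix j assume "k \<in> cube M"
  then have "\<bar>k$j\<bar> \<le> int M" by (simp add: cube_def)
  then show "real_of_int \<bar>k$j\<bar> \<le> real M" by (metis of_int_le_iff of_int_of_nat_eq)
qed

lemma not_cube_kinf: "k \<notin> cube M \<Longrightarrow> real M + 1 \<le> kinf k"
proof -
  assume "k \<notin> cube M"
  then obtain j where "\<not> \<bar>k$j\<bar> \<le> int M" unfolding cube_def by auto
  then have "real M + 1 \<le> real_of_int \<bar>k$j\<bar>" by linarith
  then show ?thesis using kinf_ge[of k j] by linarith
qed

lemma zero_in_cube: "0 \<in> cube M"
  by (simp add: cube_def)



lemma root_pow: "0 < x \<Longrightarrow> 0 < d \<Longrightarrow> (x powr (1/real d)) ^ d = (x::real)"
  by (simp add: powr_realpow[symmetric] powr_powr)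

lemma psi_iter:
  fixes \<psi> :: "real \<Rightarrow> real"
  assumes dbl: "\<And>t. 1 \<le> t \<Longrightarrow> \<psi> t \<le> L * \<psi> (2*t)" and L: "0 < L"
    and pos: "\<And>t. 1 \<le> t \<Longrightarrow> 0 < \<psi> t"
  shows "1 \<le> s \<Longrightarrow> \<psi> s \<le> L^j * \<psi> (2^j * s)"
proof (induction j)
  case 0 then show ?case by simp
next
  case (Suc j)
  have "(1::real) \<le> 2^j" by simp
  then have "1 * 1 \<le> 2^j * s" using Suc.prems by (intro mult_mono) auto
  then have "1 \<le> 2^j * s" by simp
  then have "\<psi> (2^j * s) \<le> L * \<psi> (2 * (2^j * s))" by (rule dbl)
  then have "L^j * \<psi> (2^j * s) \<le> L^j * (L * \<psi> (2^Suc j * s))"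
    using L by (intro mult_left_mono) (auto simp: mult.assoc)
  then show ?case using Suc by (simp add: mult_ac)
qed

lemma psi_cmp:
  fixes \<psi> :: "real \<Rightarrow> real"
  assumes dbl: "\<And>t. 1 \<le> t \<Longrightarrow> \<psi> t \<le> L * \<psi> (2*t)" and L: "0 < L"
    and pos: "\<And>t. 1 \<le> t \<Longrightarrow> 0 < \<psi> t"
    and decr: "\<And>s t. 1 \<le> s \<Longrightarrow> s \<le> t \<Longrightarrow> \<psi> t \<le> \<psi> s"
    and u: "1 \<le> u" and s: "1 \<le> s" "s \<le> 2^j * u"
  shows "\<psi> u \<le> L^j * \<psi> s"
proof -
  have "\<psi> u \<le> L^j * \<psi> (2^j * u)" by (rule psi_iter[of \<psi> L, OF dbl L pos u])
  also have "\<dots> \<le> L^j * \<psi> s" using L by (intro mult_left_mono decr s) auto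
  finally show ?thesis .
qed

lemma knorm_zero: "1 \<le> r \<Longrightarrow> knorm r (0::int^'d) = 0"
  using knorm_bounds[of r "0::int^'d"] by (simp add: kinf_def)

lemma psiext_cube:
  fixes \<psi> :: "real \<Rightarrow> real" and k :: "int^'d"
  assumes decr: "\<And>s t. 1 \<le> s \<Longrightarrow> s \<le> t \<Longrightarrow> \<psi> t \<le> \<psi> s"
    and r: "1 \<le> r" and M: "1 \<le> M" and k: "k \<in> cube M"
  shows "\<psi> (real CARD('d) * real M) \<le> psiext \<psi> (knorm r k)"
proof -
  have DM: "1 \<le> real CARD('d) * real M"
  proof -
    have "(1::real) \<le> real CARD('d)" by (simp add: Suc_le_eq)
    then have "1 * 1 \<le> real CARD('d) * real M" using M by (intro mult_mono) auto
    then show ?thesis by simp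
  qed
  show ?thesis
  proof (cases "k = 0")
    case True
    have "knorm r k = 0" using True knorm_zero[OF r] by simp
    then show ?thesis using decr[OF _ DM] by (simp add: psiext_def)
  next
    case False
    have k1: "1 \<le> knorm r k" using kinf_ge1[OF False] knorm_bounds(1)[OF r, of k] by linarith
    have "knorm r k \<le> real CARD('d) * kinf k" by (rule knorm_bounds(2)[OF r])
    also have "\<dots> \<le> real CARD('d) * real M" using cube_kinf[OF k] by (intro mult_left_mono) auto
    finally show ?thesis using k1 decr[OF k1] by (simp add: psiext_def)
  qed
qed

lemma best_nterm_lower:
  fixes N :: "(real^'d \<Rightarrow> complex) set"
  assumes "f \<in> N"
    and "\<And>\<gamma> c. finite \<gamma> \<Longrightarrow> card \<gamma> = n \<Longrightarrow> ereal B \<le> Sp_norm p (\<lambda>x. f x - trig_poly \<gamma> c x)"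
  shows "ereal B \<le> best_nterm p N n"
proof -
  have "ereal B \<le> (INF \<gamma>\<in>{\<gamma>. finite \<gamma> \<and> card \<gamma> = n}. INF c\<in>UNIV. Sp_norm p (\<lambda>x. f x - trig_poly \<gamma> c x))"
    using assms(2) by (auto intro!: INF_greatest)
  also have "\<dots> \<le> best_nterm p N n"
    unfolding best_nterm_def using assms(1) by (rule SUP_upper2) simp
  finally show ?thesis .
qed

lemma lower_bound:
  fixes \<psi> :: "real \<Rightarrow> real" and p q :: real and r :: ereal and n :: nat
  assumes p: "0 < p" and q: "0 < q"
    and pos: "\<And>t. 1 \<le> t \<Longrightarrow> 0 < \<psi> t"
    and decr: "\<And>s t. 1 \<le> s \<Longrightarrow> s \<le> t \<Longrightarrow> \<psi> t \<le> \<psi> s"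
    and dbl: "\<And>t. 1 \<le> t \<Longrightarrow> \<psi> t \<le> L * \<psi> (2*t)" and L: "0 < L"
    and r: "1 \<le> r" and n: "1 \<le> n"
  shows "ereal (2 powr (-1/p) * min 1 ((5 ^ CARD('d)) powr (1/p-1/q)) / L^(2*CARD('d))
            * \<psi> (real n powr (1/real CARD('d))) * real n powr (1/p-1/q))
         \<le> best_nterm p (Fclass \<psi> q r :: (real^'d \<Rightarrow> complex) set) n"
proof -
  define D where "D = CARD('d)"
  define s where "s = real n powr (1/real D)"
  define e where "e = 1/p - 1/q"
  have D0: "0 < D" by (simp add: D_def)
  have s1: "1 \<le> s" unfolding s_def using n by (intro ge_one_powr_ge_zero) auto
  have sD: "s ^ D = real n" unfolding s_def using n D0 by (intro root_pow) auto
  define M where "M = nat \<lceil>s\<rceil>"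
  have M1: "s \<le> real M" "real M \<le> s + 1" "1 \<le> M"
    using s1 by (auto simp: M_def) linarith+
  define S where "S = (cube M :: (int^'d) set)"
  define NN where "NN = card S"
  have finS: "finite S" and NNe: "NN = (2*M+1)^D"
    using cube_card[of M] by (auto simp: S_def NN_def D_def)
  have NN2: "2 * real n \<le> real NN"
  proof -
    have "2 * real n \<le> 2^D * real n" using D0 n
      by (intro mult_right_mono) (auto simp: Suc_le_eq intro!: order_trans[OF _ power_increasing[of 1 D "2::real"]])
    also have "\<dots> = (2* s)^D" by (simp add: power_mult_distrib sD)
    also have "\<dots> \<le> (2*real M+1)^D" using s1 M1 by (intro power_mono) auto
    also have "\<dots> = real NN" by (simp add: NNe add.commute)
    finally show ?thesis .
  qed
  have NN5: "real NN \<le> 5^D * real n"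
  proof -
    have "real NN = (2*real M+1)^D" by (simp add: NNe add.commute)
    also have "\<dots> \<le> (5* s)^D" using s1 M1 by (intro power_mono) auto
    also have "\<dots> = 5^D * real n" by (simp add: power_mult_distrib sD)
    finally show ?thesis .
  qed
  have NNpos: "0 < real NN" using NN2 n by linarith
  have DM1: "1 \<le> real D * real M"
  proof -
    have "(1::real) \<le> real D" using D0 by (simp add: Suc_le_eq)
    then have "1 * 1 \<le> real D * real M" using M1 by (intro mult_mono) auto
    then show ?thesis by simp
  qed
  define \<Psi> where "\<Psi> = \<psi> (real D * real M)"
  have \<Psi>pos: "0 < \<Psi>" unfolding \<Psi>_def by (rule pos[OF DM1])
  define \<alpha> where "\<alpha> = \<Psi> * real NN powr (-1/q)"
  have \<alpha>pos: "0 < \<alpha>" unfolding \<alpha>_def using \<Psi>pos NNpos by simp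
  define f where "f = (trig_poly S (\<lambda>_. complex_of_real \<alpha>) :: real^'d \<Rightarrow> complex)"
  have cf: "fourier_coeff f k = (if k \<in> S then complex_of_real \<alpha> else 0)" for k
    unfolding f_def by (rule fourier_coeff_trig[OF finS])
  have Lf: "Lper f" unfolding f_def by (rule Lper_trig[OF finS])
  have psiS: "\<Psi> \<le> psiext \<psi> (knorm r k)" if "k \<in> S" for k
    unfolding \<Psi>_def D_def using psiext_cube[of \<psi> r M k, OF decr r M1(3)] that S_def by blast
  define g where "g = (\<lambda>k. (norm (fourier_coeff f k) / psiext \<psi> (knorm r k)) powr q)"
  have g0: "0 \<le> g k" for k unfolding g_def by simp
  have gS: "sum g S \<le> 1"
  proof -
    have "sum g S \<le> (\<Sum>k\<in>S. (\<alpha> / \<Psi>) powr q)"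
    proof (intro sum_mono)
      fix k assume k: "k \<in> S"
      have "\<alpha> / psiext \<psi> (knorm r k) \<le> \<alpha> / \<Psi>"
        using psiS[OF k] \<Psi>pos \<alpha>pos by (intro divide_left_mono) auto
      then show "g k \<le> (\<alpha> / \<Psi>) powr q"
        unfolding g_def cf using k \<alpha>pos \<Psi>pos psiS[OF k] q by (auto intro!: powr_mono2)
    qed
    also have "\<dots> = real NN * (real NN powr (-1/q)) powr q"
      using \<Psi>pos by (simp add: NN_def \<alpha>_def)
    also have "\<dots> = real NN * real NN powr (-1)" using q by (simp only: powr_powr) simp
    also have "\<dots> = 1" using NNpos by (simp add: powr_minus)
    finally show ?thesis .
  qed
  have gF: "sum g F \<le> 1" if "finite F" for F
  proof -
    have "sum g F = sum g (F \<inter> S)"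
      using that by (intro sum.mono_neutral_right) (auto simp: g_def cf)
    also have "\<dots> \<le> sum g S" using finS g0 by (intro sum_mono2) auto
    finally show ?thesis using gS by simp
  qed
  have gsum: "g summable_on UNIV" "infsum g UNIV \<le> 1"
    using fin_bound[of UNIV g 1] g0 gF by auto
  have fF: "f \<in> Fclass \<psi> q r"
  proof -
    have "0 \<le> infsum g UNIV" by (rule infsum_nonneg) (rule g0)
    then have "infsum g UNIV powr (1/q) \<le> 1"
      using gsum(2) q by (intro powr_le1) auto
    then show ?thesis using Lf gsum(1) unfolding Fclass_def g_def by auto
  qed
  have key: "ereal ((real NN / 2) powr (1/p) * \<alpha>) \<le> Sp_norm p (\<lambda>x. f x - trig_poly \<gamma> c x)"
    if fin: "finite \<gamma>" and card: "card \<gamma> = n" for \<gamma> c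
  proof -
    have fai: "f absolutely_integrable_on torus" using Lf by (simp add: Lper_def)
    define h where "h = (\<lambda>k. norm (fourier_coeff (\<lambda>x. f x - trig_poly \<gamma> c x) k) powr p)"
    have h: "h k = norm ((if k \<in> S then complex_of_real \<alpha> else 0) - (if k \<in> \<gamma> then c k else 0)) powr p" for k
      unfolding h_def fourier_coeff_diff_trig[OF fai fin] cf ..
    show ?thesis
    proof (cases "h summable_on UNIV")
      case False
      then show ?thesis by (simp add: Sp_norm_def h_def)
    next
      case True
      have "sum h (S - \<gamma>) \<le> infsum h UNIV"
        using True finS by (intro finite_sum_le_infsum) (auto simp: h_def)
      moreover have "sum h (S - \<gamma>) = real (card (S - \<gamma>)) * \<alpha> powr p"
        using \<alpha>pos by (simp add: h)
      moreover have "real NN / 2 \<le> real (card (S - \<gamma>))"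
      proof -
        have "card S - card \<gamma> \<le> card (S - \<gamma>)" using diff_card_le_card_Diff[OF fin] by simp
        then have "real NN - real n \<le> real (card (S - \<gamma>))" using card NN_def by linarith
        then show ?thesis using NN2 by linarith
      qed
      ultimately have "(real NN / 2) * \<alpha> powr p \<le> infsum h UNIV"
        by (smt (verit, best) mult_right_mono powr_ge_zero)
      then have "((real NN / 2) * \<alpha> powr p) powr (1/p) \<le> infsum h UNIV powr (1/p)"
        using p NNpos \<alpha>pos by (intro powr_mono2) auto
      moreover have "((real NN / 2) * \<alpha> powr p) powr (1/p) = (real NN / 2) powr (1/p) * \<alpha>"
        using p NNpos \<alpha>pos by (subst powr_mult) (auto simp: powr_powr)
      ultimately show ?thesis using True by (simp add: Sp_norm_def h_def)
    qed
  qed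
  have main: "ereal ((real NN / 2) powr (1/p) * \<alpha>) \<le> best_nterm p (Fclass \<psi> q r :: (real^'d \<Rightarrow> complex) set) n"
    by (rule best_nterm_lower[OF fF key]) auto
  have NNe_bound: "min 1 ((5 ^ D) powr e) * real n powr e \<le> real NN powr e"
  proof (cases "0 \<le> e")
    case True
    have "real n powr e \<le> real NN powr e" using True NN2 n by (intro powr_mono2) auto
    then show ?thesis using n by (smt (verit) min.cobounded1 mult_right_mono powr_ge_zero mult_left_le_one_le)
  next
    case False
    have "(5^D * real n) powr e \<le> real NN powr e"
      using False NNpos NN5 by (intro powr_mono2') auto
    then have "(5^D) powr e * real n powr e \<le> real NN powr e" by (simp add: powr_mult)
    then show ?thesis by (smt (verit) min.cobounded2 mult_right_mono powr_ge_zero)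
  qed
  have psi_bound: "\<psi> s \<le> L^(2*D) * \<Psi>"
  proof -
    have "real D * real M \<le> real D * (2 * s)" using M1 s1 by (intro mult_left_mono) auto
    also have "\<dots> = real (2*D) * s" by simp
    also have "\<dots> \<le> 2^(2*D) * s"
    proof -
      have "2*D < 2^(2*D)" by (rule less_exp)
      then have "real (2*D) \<le> 2^(2*D)" by (metis less_imp_le of_nat_le_iff of_nat_numeral of_nat_power)
      then show ?thesis using s1 by (intro mult_right_mono) auto
    qed
    finally show ?thesis unfolding \<Psi>_def by (intro psi_cmp[of \<psi> L, OF dbl L pos decr s1 DM1])
  qed
  have "2 powr (-1/p) * min 1 ((5 ^ D) powr e) / L^(2*D) * \<psi> s * real n powr e
        = 2 powr (-1/p) * (min 1 ((5 ^ D) powr e) * real n powr e) * (\<psi> s / L^(2*D))" by simp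
  also have "\<dots> \<le> 2 powr (-1/p) * real NN powr e * \<Psi>"
  proof -
    have a: "\<psi> s / L^(2*D) \<le> \<Psi>" using psi_bound L by (simp add: divide_le_eq mult.commute)
    have b: "0 \<le> \<psi> s / L^(2*D)" using pos[OF s1] L by simp
    have c: "(min 1 ((5 ^ D) powr e) * real n powr e) * (\<psi> s / L^(2*D)) \<le> real NN powr e * \<Psi>"
      using mult_mono[OF NNe_bound a _ b] by simp
    have "2 powr (-1/p) * ((min 1 ((5 ^ D) powr e) * real n powr e) * (\<psi> s / L^(2*D))) \<le> 2 powr (-1/p) * (real NN powr e * \<Psi>)"
      by (rule mult_left_mono[OF c]) simp
    then show ?thesis by (metis mult.assoc)
  qed
  also have "\<dots> = (real NN / 2) powr (1/p) * \<alpha>"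
  proof -
    have e1: "real NN powr e = real NN powr (1/p) * real NN powr (-1/q)"
      unfolding e_def using powr_add[of "real NN" "1/p" "-1/q"] by simp
    have e2: "(real NN/2) powr (1/p) = real NN powr (1/p) / 2 powr (1/p)"
      by (rule powr_divide)
    have e3: "2 powr (-1/p) = 1 / 2 powr (1/p)"
      using powr_minus_divide[of 2 "1/p"] by simp
    show ?thesis unfolding \<alpha>_def e1 e2 e3 by simp
  qed
  finally show ?thesis using main unfolding D_def s_def e_def by (meson ereal_less_eq(3) order.trans)
qed



lemma chord:
  fixes \<psi> :: "real \<Rightarrow> real"
  assumes p: "0 < p" and pos: "\<And>t. 1 \<le> t \<Longrightarrow> 0 < \<psi> t"
    and decr: "\<And>s t. 1 \<le> s \<Longrightarrow> s \<le> t \<Longrightarrow> \<psi> t \<le> \<psi> s"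
    and t0: "1 \<le> t0" and conv: "convex_on {t0<..} (\<lambda>t. \<psi> t powr p)"
    and der: "\<forall>t>t0. \<exists>D. (\<psi> has_real_derivative D) (at t within {t..}) \<and> t * \<bar>D\<bar> / \<psi> t \<ge> K0"
    and xy: "t0 < x" "x < y"
  shows "\<psi> y powr p * (1 + p * K0 * (y - x) / y) \<le> \<psi> x powr p"
proof -
  define \<phi> where "\<phi> = (\<lambda>t. \<psi> t powr p)"
  have y1: "1 \<le> y" using xy t0 by linarith
  have \<psi>y: "0 < \<psi> y" using pos[OF y1] .
  obtain D where Dd: "(\<psi> has_real_derivative D) (at y within {y..})" and DK: "y * \<bar>D\<bar> / \<psi> y \<ge> K0"
    using der xy by (meson less_trans)
  have nb: "at y within {y..} \<noteq> (bot :: real filter)"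
    by (simp add: at_within_Ici_at_right)
  have ev: "eventually (\<lambda>z. y < z) (at y within {y..})"
    unfolding eventually_at_filter by (auto intro!: always_eventually)
  have D0: "D \<le> 0"
  proof (rule tendsto_upperbound)
    show "((\<lambda>z. (\<psi> z - \<psi> y) / (z - y)) \<longlongrightarrow> D) (at y within {y..})"
      using Dd by (simp add: has_field_derivative_iff)
    show "eventually (\<lambda>z. (\<psi> z - \<psi> y) / (z - y) \<le> 0) (at y within {y..})"
      using ev by eventually_elim (use decr y1 in \<open>auto intro!: divide_nonpos_pos\<close>)
  qed (rule nb)
  have Dphi: "(\<phi> has_real_derivative (p * \<psi> y powr (p - 1)) * D) (at y within {y..})"
    unfolding \<phi>_def by (rule DERIV_chain2[OF has_real_derivative_powr[OF \<psi>y] Dd])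
  have slope: "(\<phi> y - \<phi> x) / (y - x) \<le> (p * \<psi> y powr (p - 1)) * D"
  proof (rule tendsto_lowerbound)
    show "((\<lambda>z. (\<phi> z - \<phi> y) / (z - y)) \<longlongrightarrow> (p * \<psi> y powr (p - 1)) * D) (at y within {y..})"
      using Dphi by (simp add: has_field_derivative_iff)
    show "eventually (\<lambda>z. (\<phi> y - \<phi> x) / (y - x) \<le> (\<phi> z - \<phi> y) / (z - y)) (at y within {y..})"
      using ev
    proof eventually_elim
      case (elim z)
      have I: "x \<in> {t0<..}" "z \<in> {t0<..}" using xy elim by auto
      have c1: "(\<phi> x - \<phi> y) / (x - y) \<le> (\<phi> x - \<phi> z) / (x - z)"
        using convex_on_slope_le(1)[OF conv[folded \<phi>_def] I xy(2) elim] .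
      have c2: "(\<phi> x - \<phi> z) / (x - z) \<le> (\<phi> y - \<phi> z) / (y - z)"
        using convex_on_slope_le(2)[OF conv[folded \<phi>_def] I xy(2) elim] .
      have e1: "(\<phi> x - \<phi> y) / (x - y) = (\<phi> y - \<phi> x) / (y - x)"
        by (metis minus_diff_eq minus_divide_divide)
      have e2: "(\<phi> y - \<phi> z) / (y - z) = (\<phi> z - \<phi> y) / (z - y)"
        by (metis minus_diff_eq minus_divide_divide)
      show ?case using c1 c2 e1 e2 by linarith
    qed
  qed (rule nb)
  have absD: "K0 * \<psi> y / y \<le> - D"
  proof -
    have "K0 * \<psi> y \<le> y * \<bar>D\<bar>" using DK \<psi>y by (simp add: pos_le_divide_eq)
    then show ?thesis using y1 D0 by (simp add: divide_le_eq mult.commute)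
  qed
  have "(p * \<psi> y powr (p - 1)) * D \<le> - (p * \<psi> y powr (p - 1)) * (K0 * \<psi> y / y)"
  proof -
    have "0 \<le> p * \<psi> y powr (p - 1)" using p by simp
    from mult_left_mono[OF absD this] show ?thesis by (simp add: algebra_simps)
  qed
  also have "\<dots> = - p * K0 * \<phi> y / y"
  proof -
    have "\<psi> y powr (p - 1) * \<psi> y = \<psi> y powr p"
      using powr_add[of "\<psi> y" "p - 1" 1] \<psi>y by simp
    then show ?thesis unfolding \<phi>_def by (simp add: field_simps)
  qed
  finally have "(\<phi> y - \<phi> x) / (y - x) \<le> - p * K0 * \<phi> y / y" using slope by linarith
  then have "\<phi> y - \<phi> x \<le> (- p * K0 * \<phi> y / y) * (y - x)"
    using xy by (simp add: divide_le_eq)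
  then show ?thesis unfolding \<phi>_def using y1 by (simp add: field_simps)
qed

lemma bern: "0 \<le> (x::real) \<Longrightarrow> 1 + real n * x \<le> (1 + x) ^ n"
proof (induction n)
  case 0 then show ?case by simp
next
  case (Suc n)
  have "1 + real (Suc n) * x \<le> (1 + real n * x) * (1 + x)"
    using Suc.prems by (simp add: algebra_simps)
  also have "\<dots> \<le> (1 + x) ^ n * (1 + x)"
    using Suc by (intro mult_right_mono) auto
  finally show ?case by (simp add: mult.commute)
qed

lemma two_root_le: "1 \<le> N \<Longrightarrow> 2 powr (1 / real N) \<le> 1 + 1 / real N"
proof -
  assume N: "1 \<le> N"
  have "2 \<le> (1 + 1 / real N) ^ N" using bern[of "1 / real N" N] N by simp
  then have "2 powr (1 / real N) \<le> ((1 + 1 / real N) ^ N) powr (1 / real N)"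
    by (intro powr_mono2) auto
  also have "\<dots> = 1 + 1 / real N"
  proof -
    have b: "0 < 1 + 1 / real N" using N by (simp add: add_pos_nonneg)
    have "((1 + 1 / real N) ^ N) = (1 + 1 / real N) powr real N" by (rule powr_realpow[OF b, symmetric])
    then show ?thesis using N b by (simp add: powr_powr)
  qed
  finally show ?thesis .
qed

lemma exists_lambda:
  fixes c c' :: real
  assumes c': "0 < c'" "c' < c"
  shows "\<exists>N::nat. 1 \<le> N \<and> (2 powr (1 / real N)) powr c' \<le> 1 + c * (1 - 1 / (2 powr (1 / real N)))"
proof -
  define h where "h = (\<lambda>l::real. 1 + c * (1 - 1 / l) - l powr c')"
  have "(h has_real_derivative (c - c')) (at 1)"
    unfolding h_def by (auto intro!: derivative_eq_intros)
  from DERIV_pos_inc_right[where f=h and x=1 and l="c - c'", OF this] c'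
  obtain \<delta> where \<delta>: "\<delta> > 0" "\<And>e. e > 0 \<Longrightarrow> e < \<delta> \<Longrightarrow> h 1 < h (1 + e)"
    by auto
  define N where "N = nat \<lceil>1 / \<delta>\<rceil> + 1"
  have N1: "1 \<le> N" by (simp add: N_def)
  have "1 / \<delta> < real N" unfolding N_def by linarith
  then have Nd: "1 / real N < \<delta>" using \<delta>(1) N1 by (simp add: divide_less_eq field_simps)
  define l where "l = 2 powr (1 / real N)"
  have l1: "1 < l" unfolding l_def using N1 by simp
  have l2: "l < 1 + \<delta>" using two_root_le[OF N1] Nd unfolding l_def by linarith
  have "h 1 < h (1 + (l - 1))" using \<delta>(2)[of "l - 1"] l1 l2 by simp
  then have "l powr c' < 1 + c * (1 - 1 / l)" by (simp add: h_def)
  then show ?thesis using N1 by (intro exI[of _ N]) (simp add: l_def)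
qed

lemma decay:
  fixes \<psi> :: "real \<Rightarrow> real"
  assumes H: "\<And>x y. t0 < x \<Longrightarrow> x < y \<Longrightarrow> \<psi> y powr p * (1 + c * (y - x) / y) \<le> \<psi> x powr p"
    and t0: "0 < t0" and c': "0 < c'" "c' < c"
  shows "\<And>x. t0 < x \<Longrightarrow> \<psi> (2 * x) powr p \<le> 2 powr (-c') * \<psi> x powr p"
proof -
  obtain N :: nat where N1: "1 \<le> N" and lam: "(2 powr (1 / real N)) powr c' \<le> 1 + c * (1 - 1 / (2 powr (1 / real N)))"
    using exists_lambda[OF c'] by blast
  define l where "l = 2 powr (1 / real N)"
  have l1: "1 < l" unfolding l_def using N1 by simp
  have step: "\<psi> (l * x) powr p \<le> l powr (-c') * \<psi> x powr p" if x: "t0 < x" for x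
  proof -
    have xl: "x < l * x" using l1 x t0 by simp
    have "\<psi> (l * x) powr p * l powr c' \<le> \<psi> (l * x) powr p * (1 + c * (1 - 1 / l))"
      using lam unfolding l_def[symmetric] by (intro mult_left_mono) auto
    also have "1 + c * (1 - 1 / l) = 1 + c * (l * x - x) / (l * x)"
      using x t0 l1 by (simp add: field_simps)
    also have "\<psi> (l * x) powr p * \<dots> \<le> \<psi> x powr p" by (rule H[OF x xl])
    finally have "\<psi> (l * x) powr p * l powr c' \<le> \<psi> x powr p" .
    then show ?thesis using l1 by (simp add: powr_minus divide_simps mult.commute)
  qed
  have iter: "\<psi> (l ^ j * x) powr p \<le> (l powr (-c')) ^ j * \<psi> x powr p" if x: "t0 < x" for j x
  proof (induction j)
    case 0 then show ?case by simp
  next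
    case (Suc j)
    have "x \<le> l ^ j * x" using l1 x t0 by (simp add: one_le_power)
    then have "t0 < l ^ j * x" using x by linarith
    then have "\<psi> (l * (l ^ j * x)) powr p \<le> l powr (-c') * \<psi> (l ^ j * x) powr p" by (rule step)
    also have "\<dots> \<le> l powr (-c') * ((l powr (-c')) ^ j * \<psi> x powr p)"
      using Suc by (intro mult_left_mono) auto
    finally show ?case by (simp add: mult_ac)
  qed
  have lN: "l ^ N = 2" unfolding l_def using N1 by (simp add: powr_realpow[symmetric] powr_powr)
  have lc: "(l powr (-c')) ^ N = 2 powr (-c')"
  proof -
    have "(l powr (-c')) ^ N = (l ^ N) powr (-c')"
      using l1 by (simp add: powr_realpow[symmetric] powr_powr mult.commute)
    then show ?thesis by (simp add: lN)
  qed
  fix x assume "t0 < x"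
  from iter[OF this, of N] show "\<psi> (2 * x) powr p \<le> 2 powr (-c') * \<psi> x powr p" by (simp add: lN lc)
qed



lemma kinf_cube: "kinf k \<le> real N \<Longrightarrow> k \<in> cube N"
proof -
  assume h: "kinf k \<le> real N"
  have "\<bar>k$j\<bar> \<le> int N" for j
  proof -
    have "real_of_int \<bar>k$j\<bar> \<le> real N" using kinf_ge[of k j] h by linarith
    then show ?thesis by linarith
  qed
  then show ?thesis by (simp add: cube_def)
qed

lemma dyadic:
  fixes \<psi> :: "real \<Rightarrow> real" and F :: "(int^'d) set"
  assumes pos: "\<And>t. 1 \<le> t \<Longrightarrow> 0 < \<psi> t"
    and decr: "\<And>s t. 1 \<le> s \<Longrightarrow> s \<le> t \<Longrightarrow> \<psi> t \<le> \<psi> s"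
    and s: "0 < s" and \<rho>': "0 < \<rho>'" and \<rho>: "2 ^ CARD('d) * \<rho>' < 1"
    and dec: "\<And>x. T \<le> x \<Longrightarrow> \<psi> (2 * x) powr s \<le> \<rho>' * \<psi> x powr s"
    and u: "1 \<le> u" "T \<le> real u"
    and F: "finite F" "\<And>k. k \<in> F \<Longrightarrow> real u \<le> kinf k"
  shows "(\<Sum>k\<in>F. \<psi> (kinf k) powr s) \<le> 5 ^ CARD('d) * real u ^ CARD('d) * \<psi> (real u) powr s / (1 - 2 ^ CARD('d) * \<rho>')"
proof -
  define d where "d = CARD('d)"
  define \<rho>0 where "\<rho>0 = 2 ^ d * \<rho>'"
  have \<rho>0: "0 < \<rho>0" "\<rho>0 < 1" using \<rho> \<rho>' by (auto simp: \<rho>0_def d_def)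
  define g where "g = (\<lambda>k::int^'d. \<psi> (kinf k) powr s)"
  define jf where "jf = (\<lambda>k::int^'d. nat \<lfloor>log 2 (kinf k / real u)\<rfloor>)"
  have u0: "0 < real u" using u by simp
  have jb: "2 ^ jf k * real u \<le> kinf k \<and> kinf k < 2 ^ (jf k + 1) * real u" if k: "k \<in> F" for k
  proof -
    have q1: "1 \<le> kinf k / real u" using F(2)[OF k] u0 by simp
    define z where "z = \<lfloor>log 2 (kinf k / real u)\<rfloor>"
    have z0: "0 \<le> z" unfolding z_def using q1 by simp
    have "2 powr z \<le> kinf k / real u \<and> kinf k / real u < 2 powr (z + 1)"
      using floor_log_eq_powr_iff[of "kinf k / real u" 2 z] q1 unfolding z_def by simp
    moreover have "jf k = nat z" by (simp add: jf_def z_def)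
    moreover have "2 powr z = 2 ^ nat z" "2 powr (z + 1) = 2 ^ (nat z + 1)"
    proof -
      have e1: "real_of_int z = real (nat z)" and e2: "real_of_int (z + 1) = real (nat z + 1)" using z0 by auto
      show "2 powr z = 2 ^ nat z" unfolding e1 by (rule powr_realpow) simp
      show "2 powr (z + 1) = 2 ^ (nat z + 1)" unfolding e2 by (rule powr_realpow) simp
    qed
    ultimately show ?thesis using u0 by (auto simp: pos_le_divide_eq pos_divide_less_eq mult.commute)
  qed
  have iter: "\<psi> (2 ^ j * real u) powr s \<le> \<rho>' ^ j * \<psi> (real u) powr s" for j
  proof (induction j)
    case 0 then show ?case by simp
  next
    case (Suc j)
    have "real u \<le> 2 ^ j * real u" using u0 by simp
    then have "T \<le> 2 ^ j * real u" using u by linarith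
    then have "\<psi> (2 * (2 ^ j * real u)) powr s \<le> \<rho>' * \<psi> (2 ^ j * real u) powr s" by (rule dec)
    also have "\<dots> \<le> \<rho>' * (\<rho>' ^ j * \<psi> (real u) powr s)" using Suc \<rho>' by (intro mult_left_mono) auto
    finally show ?case by (simp add: mult_ac)
  qed
  have gb: "g k \<le> \<rho>' ^ jf k * \<psi> (real u) powr s" if k: "k \<in> F" for k
  proof -
    have a0: "(1::real) \<le> 2 ^ jf k" by simp
    have "1 * 1 \<le> 2 ^ jf k * real u" using u by (intro mult_mono a0) auto
    then have a: "1 \<le> 2 ^ jf k * real u" by simp
    have "\<psi> (kinf k) \<le> \<psi> (2 ^ jf k * real u)" using decr[OF a] jb[OF k] by auto
    then have "g k \<le> \<psi> (2 ^ jf k * real u) powr s"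
      unfolding g_def using pos a jb[OF k] s by (intro powr_mono2) (auto intro: less_imp_le)
    then show ?thesis using iter[of "jf k"] by linarith
  qed
  have cardb: "real (card {k\<in>F. jf k = j}) \<le> 5 ^ d * real u ^ d * 2 ^ (j * d)" for j
  proof -
    have "{k\<in>F. jf k = j} \<subseteq> cube (2 ^ (j+1) * u)"
    proof
      fix k assume "k \<in> {k\<in>F. jf k = j}"
      then have "kinf k \<le> real (2 ^ (j+1) * u)" using jb[of k] by auto
      then show "k \<in> cube (2 ^ (j+1) * u)" by (rule kinf_cube)
    qed
    then have "card {k\<in>F. jf k = j} \<le> card (cube (2 ^ (j+1) * u) :: (int^'d) set)"
      using cube_card by (intro card_mono) auto
    also have "\<dots> = (2 * (2 ^ (j+1) * u) + 1) ^ d" using cube_card[of "2 ^ (j+1) * u", where 'd='d] by (simp add: d_def)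
    also have "\<dots> \<le> (5 * 2 ^ j * u) ^ d"
    proof (intro power_mono)
      have "1 \<le> 2 ^ j * u" using u by simp
      then show "2 * (2 ^ (j+1) * u) + 1 \<le> 5 * 2 ^ j * u" by simp
    qed simp
    finally have "real (card {k\<in>F. jf k = j}) \<le> real ((5 * 2 ^ j * u) ^ d)" by linarith
    also have "\<dots> = 5 ^ d * real u ^ d * 2 ^ (j * d)"
    proof -
      have e: "(2::real) ^ (j * d) = (2 ^ j) ^ d" by (simp add: power_mult)
      show ?thesis unfolding e by (simp add: power_mult_distrib)
    qed
    finally show ?thesis .
  qed
  have "sum g F = (\<Sum>j\<in>jf ` F. sum g {k\<in>F. jf k = j})"
    by (rule sum.image_gen[OF F(1)])
  also have "\<dots> \<le> (\<Sum>j\<in>jf ` F. 5 ^ d * real u ^ d * \<psi> (real u) powr s * \<rho>0 ^ j)"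
  proof (intro sum_mono)
    fix j assume "j \<in> jf ` F"
    have "sum g {k\<in>F. jf k = j} \<le> (\<Sum>k\<in>{k\<in>F. jf k = j}. \<rho>' ^ j * \<psi> (real u) powr s)"
      using gb by (intro sum_mono) auto
    also have "\<dots> = real (card {k\<in>F. jf k = j}) * (\<rho>' ^ j * \<psi> (real u) powr s)" by simp
    also have "\<dots> \<le> (5 ^ d * real u ^ d * 2 ^ (j * d)) * (\<rho>' ^ j * \<psi> (real u) powr s)"
      using \<rho>' by (intro mult_right_mono cardb) auto
    also have "\<dots> = 5 ^ d * real u ^ d * \<psi> (real u) powr s * \<rho>0 ^ j"
      by (simp add: \<rho>0_def power_mult_distrib power_mult mult_ac)
    finally show "sum g {k\<in>F. jf k = j} \<le> 5 ^ d * real u ^ d * \<psi> (real u) powr s * \<rho>0 ^ j" .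
  qed
  also have "\<dots> = 5 ^ d * real u ^ d * \<psi> (real u) powr s * (\<Sum>j\<in>jf ` F. \<rho>0 ^ j)"
    by (simp add: sum_distrib_left)
  also have "\<dots> \<le> 5 ^ d * real u ^ d * \<psi> (real u) powr s * (1 / (1 - \<rho>0))"
  proof (intro mult_left_mono)
    obtain J where J: "jf ` F \<subseteq> {..<J}"
      using finite_nat_bounded[OF finite_imageI[OF F(1)]] by blast
    have "(\<Sum>j\<in>jf ` F. \<rho>0 ^ j) \<le> (\<Sum>j<J. \<rho>0 ^ j)"
      using J \<rho>0 by (intro sum_mono2) auto
    also have "\<dots> = (1 - \<rho>0 ^ J) / (1 - \<rho>0)" using \<rho>0 by (simp add: sum_gp_strict)
    also have "\<dots> \<le> 1 / (1 - \<rho>0)" using \<rho>0 by (intro divide_right_mono) auto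
    finally show "(\<Sum>j\<in>jf ` F. \<rho>0 ^ j) \<le> 1 / (1 - \<rho>0)" .
  qed simp
  finally show ?thesis by (simp add: g_def d_def \<rho>0_def)
qed

lemma tail:
  fixes \<psi> :: "real \<Rightarrow> real"
  assumes pos: "\<And>t. 1 \<le> t \<Longrightarrow> 0 < \<psi> t"
    and decr: "\<And>s t. 1 \<le> s \<Longrightarrow> s \<le> t \<Longrightarrow> \<psi> t \<le> \<psi> s"
    and s: "0 < s" and \<rho>': "0 < \<rho>'" and \<rho>: "2 ^ CARD('d) * \<rho>' < 1"
    and dec: "\<And>x. T \<le> x \<Longrightarrow> \<psi> (2 * x) powr s \<le> \<rho>' * \<psi> x powr s"
    and T1: "1 \<le> T"
  shows "\<exists>C>0. \<forall>M::nat. \<forall>F. finite F \<longrightarrow> F \<inter> (cube M :: (int^'d) set) = {} \<longrightarrow>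
           (\<Sum>k\<in>F. \<psi> (kinf k) powr s) \<le> C * (real M + 1) ^ CARD('d) * \<psi> (real M + 1) powr s"
proof -
  define d where "d = CARD('d)"
  define A where "A = 5 ^ d / (1 - 2 ^ d * \<rho>')"
  have A: "0 < A" using \<rho> by (simp add: A_def d_def)
  define U0 where "U0 = nat \<lceil>T\<rceil>"
  have U0: "T \<le> real U0" "1 \<le> U0" using T1 by (auto simp: U0_def) linarith
  define B0 where "B0 = A * real U0 ^ d * \<psi> (real U0) powr s"
  define B1 where "B1 = real (card (cube (U0 - 1) :: (int^'d) set)) * \<psi> 1 powr s"
  have U0r: "1 \<le> real U0" using U0(2) by simp
  have \<psi>U0: "0 < \<psi> (real U0) powr s" using pos[OF U0r] by simp
  define C where "C = max A ((B0 + B1) / \<psi> (real U0) powr s)"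
  have C: "0 < C" using A by (simp add: C_def)
  have bound: "(\<Sum>k\<in>F. \<psi> (kinf k) powr s) \<le> C * (real M + 1) ^ d * \<psi> (real M + 1) powr s"
    if F: "finite F" "F \<inter> (cube M :: (int^'d) set) = {}" for M F
  proof -
    have kF: "real M + 1 \<le> kinf k" if "k \<in> F" for k using F that not_cube_kinf[of k M] by auto
    have M1: "1 \<le> real M + 1" by simp
    have nonneg: "0 \<le> (real M + 1) ^ d * \<psi> (real M + 1) powr s" by simp
    show ?thesis
    proof (cases "U0 \<le> M + 1")
      case True
      have "(\<Sum>k\<in>F. \<psi> (kinf k) powr s) \<le> 5 ^ CARD('d) * real (M+1) ^ CARD('d) * \<psi> (real (M+1)) powr s / (1 - 2 ^ CARD('d) * \<rho>')"
        using True U0 kF by (intro dyadic[where \<psi>=\<psi> and s=s and \<rho>'=\<rho>' and T=T, OF pos decr s \<rho>' \<rho> dec _ _ F(1)]) (auto simp: add.commute)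
      also have "\<dots> = A * ((real M + 1) ^ d * \<psi> (real M + 1) powr s)" by (simp add: A_def d_def add.commute)
      also have "\<dots> \<le> C * ((real M + 1) ^ d * \<psi> (real M + 1) powr s)"
        by (intro mult_right_mono nonneg) (simp add: C_def)
      finally show ?thesis by (simp add: mult.assoc)
    next
      case False
      define Q where "Q = (cube (U0 - 1) :: (int^'d) set)"
      have finQ: "finite Q" using cube_card[of "U0 - 1", where 'd='d] by (simp add: Q_def)
      have "(\<Sum>k\<in>F. \<psi> (kinf k) powr s) = (\<Sum>k\<in>F \<inter> Q. \<psi> (kinf k) powr s) + (\<Sum>k\<in>F - Q. \<psi> (kinf k) powr s)"
        using F(1) by (rule sum.Int_Diff)
      also have "(\<Sum>k\<in>F - Q. \<psi> (kinf k) powr s) \<le> B0"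
      proof -
        have "(\<Sum>k\<in>F - Q. \<psi> (kinf k) powr s) \<le> 5 ^ CARD('d) * real U0 ^ CARD('d) * \<psi> (real U0) powr s / (1 - 2 ^ CARD('d) * \<rho>')"
        proof (intro dyadic[where \<psi>=\<psi> and s=s and \<rho>'=\<rho>' and T=T, OF pos decr s \<rho>' \<rho> dec U0(2) U0(1)])
          show "finite (F - Q)" using F by simp
          fix k assume "k \<in> F - Q"
          then have "real (U0 - 1) + 1 \<le> kinf k" using not_cube_kinf[of k "U0 - 1"] by (auto simp: Q_def)
          then show "real U0 \<le> kinf k" using U0 by (simp add: of_nat_diff)
        qed
        then show ?thesis by (simp add: B0_def A_def d_def)
      qed
      also have "(\<Sum>k\<in>F \<inter> Q. \<psi> (kinf k) powr s) \<le> B1"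
      proof -
        have "(\<Sum>k\<in>F \<inter> Q. \<psi> (kinf k) powr s) \<le> (\<Sum>k\<in>F \<inter> Q. \<psi> 1 powr s)"
        proof (intro sum_mono)
          fix k assume "k \<in> F \<inter> Q"
          then have k1: "1 \<le> kinf k" using kF by force
          show "\<psi> (kinf k) powr s \<le> \<psi> 1 powr s"
            using decr[OF _ k1] pos[OF k1] s by (intro powr_mono2) auto
        qed
        also have "\<dots> = real (card (F \<inter> Q)) * \<psi> 1 powr s" by simp
        also have "\<dots> \<le> real (card Q) * \<psi> 1 powr s"
          using finQ by (intro mult_right_mono) (auto intro!: card_mono)
        finally show ?thesis by (simp add: B1_def Q_def)
      qed
      also have "B1 + B0 = ((B0 + B1) / \<psi> (real U0) powr s) * \<psi> (real U0) powr s"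
        using \<psi>U0 by simp
      also have "\<dots> \<le> C * ((real M + 1) ^ d * \<psi> (real M + 1) powr s)"
      proof (intro mult_mono)
        show "(B0 + B1) / \<psi> (real U0) powr s \<le> C" by (simp add: C_def)
        have "\<psi> (real U0) \<le> \<psi> (real M + 1)" using False by (intro decr) auto
        then have "\<psi> (real U0) powr s \<le> \<psi> (real M + 1) powr s" using pos[OF U0r] s by (intro powr_mono2) auto
        moreover have "1 \<le> (real M + 1) ^ d" by simp
        ultimately have "1 * \<psi> (real U0) powr s \<le> (real M + 1) ^ d * \<psi> (real M + 1) powr s"
          by (intro mult_mono) auto
        then show "\<psi> (real U0) powr s \<le> (real M + 1) ^ d * \<psi> (real M + 1) powr s" by simp
        show "0 \<le> C" using C by simp
        show "0 \<le> \<psi> (real U0) powr s" by simp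
      qed
      finally show ?thesis by (simp add: mult.assoc)
    qed
  qed
  show ?thesis using C bound unfolding d_def by blast
qed



lemma infinite_vec_int: "infinite (UNIV :: (int^'d) set)"
proof -
  define f where "f = (\<lambda>i::int. (\<chi> j. i) :: int^'d)"
  have inj: "inj f"
  proof (rule injI)
    fix a b assume "f a = f b"
    then have "f a $ undefined = f b $ undefined" by simp
    then show "a = b" by (simp add: f_def)
  qed
  have "infinite (range f)"
  proof
    assume fin: "finite (range f)"
    have "finite (UNIV :: int set)" by (rule finite_imageD[OF fin inj])
    then show False using infinite_UNIV_int by simp
  qed
  then show ?thesis by (rule infinite_super[OF subset_UNIV])
qed

lemma extend_set:
  fixes A :: "(int^'d) set"
  assumes A: "finite A" "card A \<le> n"
  shows "\<exists>\<gamma>. finite \<gamma> \<and> card \<gamma> = n \<and> A \<subseteq> \<gamma>"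
proof -
  have "infinite (UNIV - A)" using infinite_vec_int A(1) by (rule Diff_infinite_finite[rotated])
  from infinite_arbitrarily_large[OF this, of "n - card A"]
  obtain B where B: "finite B" "card B = n - card A" "B \<subseteq> UNIV - A" by blast
  have dis: "A \<inter> B = {}" using B(3) by blast
  have "card (A \<union> B) = card A + card B" by (rule card_Un_disjoint[OF A(1) B(1) dis])
  then have "card (A \<union> B) = n" using B(2) A(2) by simp
  moreover have "finite (A \<union> B)" using A(1) B(1) by simp
  ultimately show ?thesis by blast
qed

lemma upper_from_tail:
  fixes f :: "real^'d \<Rightarrow> complex"
  assumes f: "f absolutely_integrable_on torus" and A: "finite A" "card A \<le> n" and T: "0 \<le> T" and p: "0 < p"
    and tailb: "\<And>F. finite F \<Longrightarrow> F \<inter> A = {} \<Longrightarrow> (\<Sum>k\<in>F. norm (fourier_coeff f k) powr p) \<le> T"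
  shows "\<exists>\<gamma> c. finite \<gamma> \<and> card \<gamma> = n \<and> Sp_norm p (\<lambda>x. f x - trig_poly \<gamma> c x) \<le> ereal (T powr (1/p))"
proof -
  obtain \<gamma> where \<gamma>: "finite \<gamma>" "card \<gamma> = n" "A \<subseteq> \<gamma>" using extend_set[OF A] by blast
  define h where "h = (\<lambda>k. norm (fourier_coeff (\<lambda>x. f x - trig_poly \<gamma> (fourier_coeff f) x) k) powr p)"
  have h: "h k = (if k \<in> \<gamma> then 0 else norm (fourier_coeff f k) powr p)" for k
    unfolding h_def fourier_coeff_diff_trig[OF f \<gamma>(1)] by simp
  have hF: "sum h F \<le> T" if "finite F" for F
  proof -
    have "sum h F = (\<Sum>k\<in>F - \<gamma>. norm (fourier_coeff f k) powr p)"
      using that by (intro sum.mono_neutral_cong_right) (auto simp: h)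
    also have "\<dots> \<le> T" using that \<gamma>(3) by (intro tailb) auto
    finally show ?thesis .
  qed
  have hs: "h summable_on UNIV" "infsum h UNIV \<le> T"
    using fin_bound[of UNIV h T] hF by (auto simp: h_def)
  have "0 \<le> infsum h UNIV" by (rule infsum_nonneg) (simp add: h_def)
  then have "infsum h UNIV powr (1/p) \<le> T powr (1/p)" using hs(2) p by (intro powr_mono2) auto
  then have "Sp_norm p (\<lambda>x. f x - trig_poly \<gamma> (fourier_coeff f) x) \<le> ereal (T powr (1/p))"
    using hs(1) by (simp add: Sp_norm_def h_def)
  then show ?thesis using \<gamma> by blast
qed

lemma best_nterm_upper:
  fixes N :: "(real^'d \<Rightarrow> complex) set"
  assumes "\<And>f. f \<in> N \<Longrightarrow> \<exists>\<gamma> c. finite \<gamma> \<and> card \<gamma> = n \<and> Sp_norm p (\<lambda>x. f x - trig_poly \<gamma> c x) \<le> ereal B"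
  shows "best_nterm p N n \<le> ereal B"
  unfolding best_nterm_def
proof (rule SUP_least)
  fix f assume "f \<in> N"
  then obtain \<gamma> c where g: "finite \<gamma>" "card \<gamma> = n" "Sp_norm p (\<lambda>x. f x - trig_poly \<gamma> c x) \<le> ereal B"
    using assms by blast
  have "(INF c\<in>UNIV. Sp_norm p (\<lambda>x. f x - trig_poly \<gamma> c x)) \<le> ereal B"
    using g(3) by (intro INF_lower2[of c]) auto
  then show "(INF \<gamma>\<in>{\<gamma>. finite \<gamma> \<and> card \<gamma> = n}. INF c\<in>UNIV. Sp_norm p (\<lambda>x. f x - trig_poly \<gamma> c x)) \<le> ereal B"
    using g(1,2) by (intro INF_lower2[of \<gamma>]) auto
qed

lemma fclass_facts:
  fixes f :: "real^'d \<Rightarrow> complex"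
  assumes f: "f \<in> Fclass \<psi> q r" and q: "0 < q"
  shows "f absolutely_integrable_on torus"
    and "\<And>F. finite F \<Longrightarrow> (\<Sum>k\<in>F. (norm (fourier_coeff f k) / psiext \<psi> (knorm r k)) powr q) \<le> 1"
proof -
  show "f absolutely_integrable_on torus" using f by (simp add: Fclass_def Lper_def)
  define g where "g = (\<lambda>k. (norm (fourier_coeff f k) / psiext \<psi> (knorm r k)) powr q)"
  have s: "g summable_on UNIV" and le: "infsum g UNIV powr (1/q) \<le> 1"
    using f by (auto simp: Fclass_def g_def)
  have "infsum g UNIV \<le> 1"
  proof (rule ccontr)
    assume "\<not> infsum g UNIV \<le> 1"
    then have "1 < infsum g UNIV powr (1/q)" using q by (intro gr_one_powr) auto
    then show False using le by simp
  qed
  note le1 = this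
  show "(\<Sum>k\<in>F. (norm (fourier_coeff f k) / psiext \<psi> (knorm r k)) powr q) \<le> 1" if "finite F" for F
  proof -
    have "sum g F \<le> infsum g UNIV" using that by (intro finite_sum_le_infsum[OF s]) (auto simp: g_def)
    then show ?thesis using le1 by (simp add: g_def)
  qed
qed

lemma outside_cube:
  fixes \<psi> :: "real \<Rightarrow> real" and k :: "int^'d"
  assumes pos: "\<And>t. 1 \<le> t \<Longrightarrow> 0 < \<psi> t"
    and decr: "\<And>s t. 1 \<le> s \<Longrightarrow> s \<le> t \<Longrightarrow> \<psi> t \<le> \<psi> s"
    and r: "1 \<le> r" and k: "k \<notin> cube M"
  shows "real M + 1 \<le> kinf k" "psiext \<psi> (knorm r k) = \<psi> (knorm r k)"
    "0 < \<psi> (knorm r k)" "\<psi> (knorm r k) \<le> \<psi> (kinf k)" "\<psi> (kinf k) \<le> \<psi> (real M + 1)"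
proof -
  show k1: "real M + 1 \<le> kinf k" by (rule not_cube_kinf[OF k])
  have kk: "kinf k \<le> knorm r k" by (rule knorm_bounds(1)[OF r])
  have i1: "1 \<le> kinf k" using k1 by simp
  then show "psiext \<psi> (knorm r k) = \<psi> (knorm r k)" using kk by (simp add: psiext_def)
  show "0 < \<psi> (knorm r k)" using kk i1 pos by simp
  show "\<psi> (knorm r k) \<le> \<psi> (kinf k)" using decr[OF i1 kk] .
  show "\<psi> (kinf k) \<le> \<psi> (real M + 1)" using decr k1 by simp
qed

lemma cube_choice:
  assumes m: "1 \<le> m"
  shows "\<exists>M. (2*M+1) ^ CARD('d::finite) \<le> m \<and> real m powr (1 / real CARD('d)) \<le> 3 * (real M + 1)"
proof -
  define D where "D = CARD('d)"
  define s where "s = real m powr (1 / real D)"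
  have D0: "0 < D" by (simp add: D_def)
  have s1: "1 \<le> s" unfolding s_def using m by (intro ge_one_powr_ge_zero) auto
  have sD: "s ^ D = real m" unfolding s_def using m D0 by (intro root_pow) auto
  define M where "M = nat \<lfloor>(s - 1) / 2\<rfloor>"
  have fl: "real M = real_of_int \<lfloor>(s - 1) / 2\<rfloor>" using s1 by (simp add: M_def)
  have f1: "real_of_int \<lfloor>(s - 1) / 2\<rfloor> \<le> (s - 1) / 2" by (rule of_int_floor_le)
  have f2: "(s - 1) / 2 < real_of_int \<lfloor>(s - 1) / 2\<rfloor> + 1" by (rule real_of_int_floor_add_one_gt)
  have g1: "real M \<le> (s - 1) / 2" using fl f1 by simp
  have g2: "(s - 1) / 2 < real M + 1" using fl f2 by simp
  have M1a: "2 * real M + 1 \<le> s" using g1 by (simp add: field_simps)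
  have g3: "s < 2 * real M + 3" using g2 by (simp add: field_simps)
  have M1b: "s \<le> 3 * (real M + 1)" using g3 by simp
  note M1 = M1a M1b
  have "real ((2*M+1) ^ D) = (2 * real M + 1) ^ D" by (simp add: add.commute)
  also have "\<dots> \<le> s ^ D" using M1 by (intro power_mono) auto
  finally have "(2*M+1) ^ D \<le> m" using sD by linarith
  then show ?thesis using M1 unfolding D_def s_def by blast
qed



lemma psiext_pos:
  fixes \<psi> :: "real \<Rightarrow> real" and k :: "int^'d"
  assumes pos: "\<And>t. 1 \<le> t \<Longrightarrow> 0 < \<psi> t" and r: "1 \<le> r"
  shows "0 < psiext \<psi> (knorm r k)"
proof (cases "k = 0")
  case True
  then show ?thesis using knorm_zero[OF r, where 'd='d] pos[of 1] by (simp add: psiext_def)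
next
  case False
  have "1 \<le> knorm r k" using kinf_ge1[OF False] knorm_bounds(1)[OF r, of k] by linarith
  then show ?thesis using pos by (simp add: psiext_def)
qed

lemma upper_pgeq:
  fixes \<psi> :: "real \<Rightarrow> real" and p q :: real and r :: ereal and n :: nat
  assumes p: "0 < p" and q: "0 < q" and pq: "q \<le> p"
    and pos: "\<And>t. 1 \<le> t \<Longrightarrow> 0 < \<psi> t"
    and decr: "\<And>s t. 1 \<le> s \<Longrightarrow> s \<le> t \<Longrightarrow> \<psi> t \<le> \<psi> s"
    and dbl: "\<And>t. 1 \<le> t \<Longrightarrow> \<psi> t \<le> L * \<psi> (2*t)" and L: "0 < L"
    and r: "1 \<le> r" and n: "1 \<le> n"
  shows "best_nterm p (Fclass \<psi> q r :: (real^'d \<Rightarrow> complex) set) n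
    \<le> ereal (3 powr (-(1/p-1/q)) * L^3 * \<psi> (real n powr (1/real CARD('d))) * real n powr (1/p-1/q))"
proof -
  define e where "e = 1/p - 1/q"
  have e0: "e \<le> 0" using p q pq by (simp add: e_def field_simps)
  define m' where "m' = n - n div 2"
  define m where "m = n div 2"
  have m'1: "1 \<le> m'" using n by (simp add: m'_def)
  have mm: "m' + m = n" by (simp add: m'_def m_def)
  obtain M where M: "(2*M+1) ^ CARD('d) \<le> m'" "real m' powr (1 / real CARD('d)) \<le> 3 * (real M + 1)"
    using cube_choice[OF m'1] by blast
  define Q where "Q = (cube M :: (int^'d) set)"
  have finQ: "finite Q" and cardQ: "card Q \<le> m'" using cube_card[of M, where 'd='d] M(1) by (auto simp: Q_def)
  define \<Psi> where "\<Psi> = \<psi> (real M + 1)"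
  have \<Psi>pos: "0 < \<Psi>" unfolding \<Psi>_def by (rule pos) simp
  define t where "t = (if m = 0 then 1 else real m powr (-(p-q)/q))"
  have t0: "0 \<le> t" by (simp add: t_def)
  have tbound: "t powr (1/p) \<le> 3 powr (-e) * real n powr e"
  proof (cases "m = 0")
    case True
    then have "n = 1" using n by (simp add: m_def)
    moreover have "1 \<le> (3::real) powr (-e)" using e0 by (intro ge_one_powr_ge_zero) auto
    ultimately show ?thesis using True by (simp add: t_def)
  next
    case False
    have "t powr (1/p) = real m powr e"
      using False p q by (simp add: t_def powr_powr e_def field_simps)
    also have "\<dots> \<le> (real n / 3) powr e"
    proof (rule powr_mono2'[OF e0])
      show "0 < real n / 3" using n by simp
      show "real n / 3 \<le> real m" using False by (simp add: m_def)
    qed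
    also have "\<dots> = 3 powr (-e) * real n powr e"
      using n by (simp add: powr_divide powr_minus_divide)
    finally show ?thesis .
  qed
  have \<Psi>bound: "\<Psi> \<le> L^3 * \<psi> (real n powr (1/real CARD('d)))"
  proof -
    define D where "D = real CARD('d)"
    have D1: "1 \<le> D" by (simp add: D_def Suc_le_eq)
    have sn1: "1 \<le> real n powr (1/D)" using n D1 by (intro ge_one_powr_ge_zero) auto
    have "real n powr (1/D) \<le> (2 * real m') powr (1/D)"
      using mm n D1 by (intro powr_mono2) (auto simp: m'_def m_def)
    also have "\<dots> = 2 powr (1/D) * real m' powr (1/D)" by (simp add: powr_mult)
    also have "\<dots> \<le> 2 * (3 * (real M + 1))"
    proof (intro mult_mono)
      show "2 powr (1/D) \<le> 2" using D1 powr_mono[of "1/D" 1 2] by simp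
      show "real m' powr (1/D) \<le> 3 * (real M + 1)" using M(2) by (simp add: D_def)
    qed auto
    also have "\<dots> \<le> 2^3 * (real M + 1)" by simp
    finally have "real n powr (1/D) \<le> 2^3 * (real M + 1)" .
    then show ?thesis unfolding \<Psi>_def D_def
      by (intro psi_cmp[of \<psi> L, OF dbl L pos decr]) (use sn1 D_def in auto)
  qed
  have key: "\<exists>\<gamma> c. finite \<gamma> \<and> card \<gamma> = n \<and> Sp_norm p (\<lambda>x. f x - trig_poly \<gamma> c x) \<le> ereal ((t * \<Psi> powr p) powr (1/p))"
    if f: "f \<in> Fclass \<psi> q r" for f :: "real^'d \<Rightarrow> complex"
  proof -
    define b where "b = (\<lambda>k. norm (fourier_coeff f k) / psiext \<psi> (knorm r k))"
    have b0: "0 \<le> b k" for k unfolding b_def using psiext_pos[where \<psi>=\<psi> and k=k, OF pos r] by simp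
    have sumb: "(\<Sum>k\<in>F. b k powr q) \<le> 1" if "finite F" for F
      using fclass_facts(2)[OF f q that] by (simp add: b_def)
    have b1: "b k \<le> 1" for k
    proof -
      have "b k powr q \<le> 1" using sumb[of "{k}"] by simp
      show ?thesis
      proof (rule ccontr)
        assume "\<not> b k \<le> 1"
        then have "1 < b k powr q" using q by (intro gr_one_powr) auto
        then show False using \<open>b k powr q \<le> 1\<close> by simp
      qed
    qed
    define G where "G = (if m = 0 then {} else {k. 1 / real m \<le> b k powr q})"
    have Gsub: "card F \<le> m" if FG: "F \<subseteq> G" "finite F" for F
    proof (cases "m = 0")
      case True then show ?thesis using FG by (simp add: G_def)
    next
      case False
      have "real (card F) * (1 / real m) = (\<Sum>k\<in>F. 1 / real m)" by simp
      also have "\<dots> \<le> (\<Sum>k\<in>F. b k powr q)" using FG False by (intro sum_mono) (auto simp: G_def)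
      also have "\<dots> \<le> 1" by (rule sumb[OF FG(2)])
      finally have "real (card F) \<le> real m" using False by (simp add: field_simps)
      then show ?thesis by simp
    qed
    have finG: "finite G"
    proof (rule ccontr)
      assume "infinite G"
      from infinite_arbitrarily_large[OF this, of "Suc m"]
      obtain F where F: "finite F" "card F = Suc m" "F \<subseteq> G" by blast
      have "card F \<le> m" by (rule Gsub[OF F(3) F(1)])
      then show False using F(2) by simp
    qed
    have cardG: "card G \<le> m" using Gsub[OF subset_refl finG] .
    define A where "A = Q \<union> G"
    have finA: "finite A" using finQ finG by (simp add: A_def)
    have cardA: "card A \<le> n"
    proof -
      have "card A \<le> card Q + card G" unfolding A_def by (rule card_Un_le)
      then show ?thesis using cardQ cardG mm by linarith
    qed
    have tailb: "(\<Sum>k\<in>F. norm (fourier_coeff f k) powr p) \<le> t * \<Psi> powr p"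
      if F: "finite F" "F \<inter> A = {}" for F
    proof -
      have termb: "norm (fourier_coeff f k) powr p \<le> t * \<Psi> powr p * b k powr q" if k: "k \<in> F" for k
      proof -
        have kQ: "k \<notin> cube M" using k F(2) by (auto simp: A_def Q_def)
        have kG: "k \<notin> G" using k F(2) by (auto simp: A_def)
        note oc = outside_cube[where \<psi>=\<psi>, OF pos decr r kQ]
        have na: "norm (fourier_coeff f k) = b k * \<psi> (knorm r k)"
          using oc(2,3) by (simp add: b_def)
        have psk: "\<psi> (knorm r k) \<le> \<Psi>" unfolding \<Psi>_def using oc(4,5) by linarith
        have x1: "norm (fourier_coeff f k) powr p = b k powr p * \<psi> (knorm r k) powr p"
          unfolding na using b0[of k] oc(3) by (simp add: powr_mult)
        have x2: "\<psi> (knorm r k) powr p \<le> \<Psi> powr p"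
          using psk oc(3) p by (intro powr_mono2) auto
        have x3: "b k powr p = b k powr q * b k powr (p - q)"
          by (simp add: powr_add[symmetric])
        have x4: "b k powr (p - q) \<le> t"
        proof (cases "m = 0")
          case True
          then show ?thesis using b0[of k] b1[of k] pq by (simp add: t_def powr_le1)
        next
          case False
          have lt: "b k powr q \<le> 1 / real m" using kG False by (auto simp: G_def)
          have "b k powr (p - q) = (b k powr q) powr ((p - q) / q)"
            using q by (simp add: powr_powr)
          also have "\<dots> \<le> (1 / real m) powr ((p - q) / q)"
            using lt pq q by (intro powr_mono2) auto
          also have "\<dots> = 1 / real m powr ((p - q) / q)" by (simp add: powr_divide)
          also have "\<dots> = real m powr (- ((p - q) / q))" by (simp add: powr_minus_divide)
          also have "\<dots> = t" using False by (simp add: t_def minus_divide_left)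
          finally show ?thesis .
        qed
        have x5: "b k powr p \<le> b k powr q * t"
          unfolding x3 by (intro mult_left_mono x4) simp
        have "norm (fourier_coeff f k) powr p \<le> (b k powr q * t) * \<Psi> powr p"
          unfolding x1 using t0 by (intro mult_mono x5 x2) auto
        then show ?thesis by (simp add: mult_ac)
      qed
      have "(\<Sum>k\<in>F. norm (fourier_coeff f k) powr p) \<le> (\<Sum>k\<in>F. t * \<Psi> powr p * b k powr q)"
        by (rule sum_mono[OF termb])
      also have "\<dots> = t * \<Psi> powr p * (\<Sum>k\<in>F. b k powr q)" by (simp add: sum_distrib_left)
      also have "\<dots> \<le> t * \<Psi> powr p * 1" using sumb[OF F(1)] t0 by (intro mult_left_mono) auto
      finally show ?thesis by simp
    qed
    show ?thesis
      by (rule upper_from_tail[OF fclass_facts(1)[OF f q] finA cardA _ p tailb]) (use t0 in auto)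
  qed
  have eqT: "(t * \<Psi> powr p) powr (1/p) = t powr (1/p) * \<Psi>"
    using t0 \<Psi>pos p by (simp add: powr_mult powr_powr)
  have fin: "t powr (1/p) * \<Psi> \<le> 3 powr (-e) * L^3 * \<psi> (real n powr (1/real CARD('d))) * real n powr e"
  proof -
    have "t powr (1/p) * \<Psi> \<le> (3 powr (-e) * real n powr e) * (L^3 * \<psi> (real n powr (1/real CARD('d))))"
      using tbound \<Psi>bound \<Psi>pos by (intro mult_mono) auto
    then show ?thesis by (simp add: mult_ac)
  qed
  have "best_nterm p (Fclass \<psi> q r :: (real^'d \<Rightarrow> complex) set) n \<le> ereal ((t * \<Psi> powr p) powr (1/p))"
    by (rule best_nterm_upper) (rule key)
  then show ?thesis using fin unfolding eqT e_def by (meson ereal_less_eq(3) order.trans)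
qed



lemma young_split:
  fixes x y \<Theta> p q :: real
  assumes x: "0 \<le> x" and y: "0 \<le> y" and \<Theta>: "0 < \<Theta>" and p: "0 < p" and pq: "p < q"
  shows "(x * y) powr p \<le> \<Theta> powr ((q - p) / q) * x powr q + \<Theta> powr (- p / q) * y powr (p * q / (q - p))"
proof (cases "x = 0 \<or> y = 0")
  case True
  then show ?thesis by auto
next
  case False
  then have x0: "0 < x" and y0: "0 < y" using x y by auto
  define s where "s = p * q / (q - p)"
  have q0: "0 < q" using p pq by simp
  have es1: "s * ((q - p) / q) = p" using pq q0 by (simp add: s_def field_simps)
  have es2: "s * p / q + p = s" using pq q0 by (simp add: s_def field_simps)
  have nn: "0 \<le> \<Theta> powr ((q - p) / q) * x powr q" "0 \<le> \<Theta> powr (- p / q) * y powr s" by simp_all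
  show ?thesis
  proof (cases "y powr s \<le> \<Theta> * x powr q")
    case True
    have "y powr p = (y powr s) powr ((q - p) / q)" using powr_powr[of y s "(q - p) / q"] es1 by simp
    also have "\<dots> \<le> (\<Theta> * x powr q) powr ((q - p) / q)"
      using True pq q0 by (intro powr_mono2) auto
    also have "\<dots> = \<Theta> powr ((q - p) / q) * x powr (q - p)"
      using \<Theta> x0 q0 by (simp add: powr_mult powr_powr)
    finally have yb: "y powr p \<le> \<Theta> powr ((q - p) / q) * x powr (q - p)" .
    have "(x * y) powr p = x powr p * y powr p" using x0 y0 by (simp add: powr_mult)
    also have "\<dots> \<le> x powr p * (\<Theta> powr ((q - p) / q) * x powr (q - p))"
      by (intro mult_left_mono yb) simp
    also have "\<dots> = \<Theta> powr ((q - p) / q) * x powr q"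
      by (simp add: powr_add[symmetric] mult_ac)
    finally show ?thesis using nn unfolding s_def by linarith
  next
    case False
    have "x powr p = (x powr q) powr (p / q)" using q0 by (simp add: powr_powr)
    also have "\<dots> \<le> (y powr s / \<Theta>) powr (p / q)"
      using False \<Theta> p q0 by (intro powr_mono2) (auto simp: field_simps)
    also have "\<dots> = \<Theta> powr (- p / q) * y powr (s * p / q)"
      using \<Theta> y0 by (simp add: powr_divide powr_powr powr_minus_divide)
    finally have xb: "x powr p \<le> \<Theta> powr (- p / q) * y powr (s * p / q)" .
    have "(x * y) powr p = x powr p * y powr p" using x0 y0 by (simp add: powr_mult)
    also have "\<dots> \<le> (\<Theta> powr (- p / q) * y powr (s * p / q)) * y powr p"
      by (intro mult_right_mono xb) simp
    also have "\<dots> = \<Theta> powr (- p / q) * y powr s"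
      by (simp add: mult.assoc powr_add[symmetric] es2)
    finally show ?thesis using nn unfolding s_def by linarith
  qed
qed

lemma upper_pltq:
  fixes \<psi> :: "real \<Rightarrow> real" and p q :: real and r :: ereal and n :: nat
  assumes p: "0 < p" and pq: "p < q"
    and pos: "\<And>t. 1 \<le> t \<Longrightarrow> 0 < \<psi> t"
    and decr: "\<And>s t. 1 \<le> s \<Longrightarrow> s \<le> t \<Longrightarrow> \<psi> t \<le> \<psi> s"
    and dbl: "\<And>t. 1 \<le> t \<Longrightarrow> \<psi> t \<le> L * \<psi> (2*t)" and L: "0 < L"
    and r: "1 \<le> r" and n: "1 \<le> n"
    and Ct: "0 < Ct"
    and tailC: "\<And>M F. finite F \<Longrightarrow> F \<inter> (cube M :: (int^'d) set) = {} \<Longrightarrow>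
           (\<Sum>k\<in>F. \<psi> (kinf k) powr (p * q / (q - p))) \<le> Ct * (real M + 1) ^ CARD('d) * \<psi> (real M + 1) powr (p * q / (q - p))"
  shows "best_nterm p (Fclass \<psi> q r :: (real^'d \<Rightarrow> complex) set) n
    \<le> ereal (2 powr (1/p) * Ct powr (1/p-1/q) * L^2 * \<psi> (real n powr (1/real CARD('d))) * real n powr (1/p-1/q))"
proof -
  define e where "e = 1/p - 1/q"
  define s where "s = p * q / (q - p)"
  have q: "0 < q" using p pq by simp
  have e0: "0 < e" using p pq by (simp add: e_def field_simps)
  have se: "s * e = 1" using p pq by (simp add: s_def e_def field_simps)
  have s0: "0 < s" using p pq by (simp add: s_def)
  obtain M where M: "(2*M+1) ^ CARD('d) \<le> n" "real n powr (1 / real CARD('d)) \<le> 3 * (real M + 1)"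
    using cube_choice[OF n] by blast
  define Q where "Q = (cube M :: (int^'d) set)"
  have finQ: "finite Q" and cardQ: "card Q \<le> n" using cube_card[of M, where 'd='d] M(1) by (auto simp: Q_def)
  define u where "u = real M + 1"
  have u1: "1 \<le> u" by (simp add: u_def)
  define \<Theta> where "\<Theta> = Ct * u ^ CARD('d) * \<psi> u powr s"
  have \<Theta>: "0 < \<Theta>" unfolding \<Theta>_def using Ct pos[OF u1] u1 by simp
  define T where "T = 2 * \<Theta> powr ((q - p) / q)"
  have key: "\<exists>\<gamma> c. finite \<gamma> \<and> card \<gamma> = n \<and> Sp_norm p (\<lambda>x. f x - trig_poly \<gamma> c x) \<le> ereal (T powr (1/p))"
    if f: "f \<in> Fclass \<psi> q r" for f :: "real^'d \<Rightarrow> complex"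
  proof -
    define b where "b = (\<lambda>k. norm (fourier_coeff f k) / psiext \<psi> (knorm r k))"
    have b0: "0 \<le> b k" for k unfolding b_def using psiext_pos[where \<psi>=\<psi> and k=k, OF pos r] by simp
    have sumb: "(\<Sum>k\<in>F. b k powr q) \<le> 1" if "finite F" for F
      using fclass_facts(2)[OF f q that] by (simp add: b_def)
    have tailb: "(\<Sum>k\<in>F. norm (fourier_coeff f k) powr p) \<le> T"
      if F: "finite F" "F \<inter> Q = {}" for F
    proof -
      have termb: "norm (fourier_coeff f k) powr p \<le> \<Theta> powr ((q - p) / q) * b k powr q + \<Theta> powr (- p / q) * \<psi> (kinf k) powr s"
        if k: "k \<in> F" for k
      proof -
        have kQ: "k \<notin> cube M" using k F(2) by (auto simp: Q_def)
        note oc = outside_cube[where \<psi>=\<psi>, OF pos decr r kQ]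
        have na: "norm (fourier_coeff f k) = b k * \<psi> (knorm r k)"
          using oc(2,3) by (simp add: b_def)
        have "norm (fourier_coeff f k) powr p \<le> \<Theta> powr ((q - p) / q) * b k powr q + \<Theta> powr (- p / q) * \<psi> (knorm r k) powr s"
          unfolding na s_def using b0[of k] oc(3) \<Theta> p pq by (intro young_split) auto
        also have "\<psi> (knorm r k) powr s \<le> \<psi> (kinf k) powr s"
          using oc(3,4) s0 by (intro powr_mono2) auto
        then have "\<Theta> powr (- p / q) * \<psi> (knorm r k) powr s \<le> \<Theta> powr (- p / q) * \<psi> (kinf k) powr s"
          by (intro mult_left_mono) auto
        finally show ?thesis by simp
      qed
      have "(\<Sum>k\<in>F. norm (fourier_coeff f k) powr p) \<le>
            (\<Sum>k\<in>F. \<Theta> powr ((q - p) / q) * b k powr q + \<Theta> powr (- p / q) * \<psi> (kinf k) powr s)"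
        by (rule sum_mono[OF termb])
      also have "\<dots> = \<Theta> powr ((q - p) / q) * (\<Sum>k\<in>F. b k powr q) + \<Theta> powr (- p / q) * (\<Sum>k\<in>F. \<psi> (kinf k) powr s)"
        by (simp add: sum.distrib sum_distrib_left)
      also have "\<dots> \<le> \<Theta> powr ((q - p) / q) * 1 + \<Theta> powr (- p / q) * \<Theta>"
      proof (intro add_mono mult_left_mono)
        show "(\<Sum>k\<in>F. b k powr q) \<le> 1" by (rule sumb[OF F(1)])
        show "(\<Sum>k\<in>F. \<psi> (kinf k) powr s) \<le> \<Theta>"
          using tailC[OF F(1), of M] F(2) unfolding Q_def \<Theta>_def u_def s_def by simp
      qed auto
      also have "\<Theta> powr (- p / q) * \<Theta> = \<Theta> powr ((q - p) / q)"
      proof -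
        have "\<Theta> powr (- p / q) * \<Theta> = \<Theta> powr (- p / q) * \<Theta> powr 1" using \<Theta> by simp
        also have "\<dots> = \<Theta> powr (- p / q + 1)" by (rule powr_add[symmetric])
        also have "- p / q + 1 = (q - p) / q" using q by (simp add: field_simps)
        finally show ?thesis .
      qed
      finally show ?thesis by (simp add: T_def)
    qed
    show ?thesis
      by (rule upper_from_tail[OF fclass_facts(1)[OF f q] finQ cardQ _ p tailb]) (auto simp: T_def)
  qed
  have "best_nterm p (Fclass \<psi> q r :: (real^'d \<Rightarrow> complex) set) n \<le> ereal (T powr (1/p))"
    by (rule best_nterm_upper) (rule key)
  moreover have "T powr (1/p) \<le> 2 powr (1/p) * Ct powr e * L^2 * \<psi> (real n powr (1/real CARD('d))) * real n powr e"
  proof -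
    have "T powr (1/p) = 2 powr (1/p) * \<Theta> powr e"
      using \<Theta> p q by (simp add: T_def powr_mult powr_powr e_def field_simps)
    also have "\<Theta> powr e = Ct powr e * (u ^ CARD('d)) powr e * \<psi> u"
    proof -
      have "\<Theta> powr e = Ct powr e * (u ^ CARD('d)) powr e * (\<psi> u powr s) powr e"
        using Ct u1 pos[OF u1] by (simp add: \<Theta>_def powr_mult)
      also have "(\<psi> u powr s) powr e = \<psi> u" using pos[OF u1] by (simp add: powr_powr se)
      finally show ?thesis .
    qed
    also have "(u ^ CARD('d)) powr e \<le> real n powr e"
    proof (intro powr_mono2)
      have "u ^ CARD('d) \<le> (2 * real M + 1) ^ CARD('d)" using u1 by (intro power_mono) (auto simp: u_def)
      also have "\<dots> = real ((2*M+1) ^ CARD('d))" by (simp add: add.commute)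
      also have "\<dots> \<le> real n" using M(1) by linarith
      finally show "u ^ CARD('d) \<le> real n" .
    qed (use e0 u1 in auto)
    also have "\<psi> u \<le> L^2 * \<psi> (real n powr (1/real CARD('d)))"
    proof (intro psi_cmp[of \<psi> L, OF dbl L pos decr u1])
      show "1 \<le> real n powr (1/real CARD('d))" using n by (intro ge_one_powr_ge_zero) auto
      show "real n powr (1/real CARD('d)) \<le> 2^2 * u" using M(2) u1 by (simp add: u_def)
    qed
    finally show ?thesis
      using Ct L pos[OF u1] by (simp add: mult_left_mono mult_right_mono mult_ac)
  qed
  ultimately show ?thesis unfolding e_def by (meson ereal_less_eq(3) order.trans)
qed


theorem mainTheorem1:
  fixes \<psi> :: "real \<Rightarrow> real" and p q :: real and r :: ereal
  assumes p_pos: "0 < p" and q_pos: "0 < q"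
    and psi_pos: "\<And>t. 1 \<le> t \<Longrightarrow> 0 < \<psi> t"
    and psi_decr: "\<And>s t. 1 \<le> s \<Longrightarrow> s \<le> t \<Longrightarrow> \<psi> t \<le> \<psi> s"
    and psi_lim: "(\<psi> \<longlongrightarrow> 0) at_top"
    and delta2: "\<exists>K>0. \<forall>t\<ge>1. \<psi> t powr p \<le> K * \<psi> (2*t) powr p"
    and extra: "p < q \<Longrightarrow> (\<exists>t0\<ge>1. convex_on {t0<..} (\<lambda>t. \<psi> t powr p) \<and>
          (\<exists>K0. K0 > real CARD('d) * (1/p - 1/q) \<and>
             (\<forall>t>t0. \<exists>D. (\<psi> has_real_derivative D) (at t within {t..}) \<and>
                     t * \<bar>D\<bar> / \<psi> t \<ge> K0)))"
    and r_ge: "1 \<le> r"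
  shows "\<exists>C1>0. \<exists>C2>0. \<forall>n::nat. n \<ge> 1 \<longrightarrow>
      ereal (C1 * \<psi> (real n powr (1 / real CARD('d))) * real n powr (1/p - 1/q))
        \<le> best_nterm p (Fclass \<psi> q r :: (real^'d \<Rightarrow> complex) set) n \<and>
      best_nterm p (Fclass \<psi> q r :: (real^'d \<Rightarrow> complex) set) n
        \<le> ereal (C2 * \<psi> (real n powr (1 / real CARD('d))) * real n powr (1/p - 1/q))"
proof -
  obtain K where K: "K > 0" "\<And>t. t \<ge> 1 \<Longrightarrow> \<psi> t powr p \<le> K * \<psi> (2*t) powr p"
    using delta2 by blast
  define L where "L = K powr (1/p)"
  have L: "0 < L" using K by (simp add: L_def)
  have dbl: "\<psi> t \<le> L * \<psi> (2*t)" if t: "1 \<le> t" for t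
  proof -
    have t2: "1 \<le> 2 * t" using t by simp
    have "\<psi> t = (\<psi> t powr p) powr (1/p)" using psi_pos[OF t] p_pos by (simp add: powr_powr)
    also have "\<dots> \<le> (K * \<psi> (2*t) powr p) powr (1/p)"
      using K(2)[OF t] p_pos psi_pos[OF t] by (intro powr_mono2) auto
    also have "\<dots> = L * \<psi> (2*t)"
      using K(1) psi_pos[OF t2] p_pos by (simp add: L_def powr_mult powr_powr)
    finally show ?thesis .
  qed
  define C1 where "C1 = 2 powr (-1/p) * min 1 ((5 ^ CARD('d)) powr (1/p-1/q)) / L^(2*CARD('d))"
  have C1: "0 < C1" using L by (simp add: C1_def)
  have low: "ereal (C1 * \<psi> (real n powr (1 / real CARD('d))) * real n powr (1/p - 1/q))
        \<le> best_nterm p (Fclass \<psi> q r :: (real^'d \<Rightarrow> complex) set) n" if n: "n \<ge> 1" for n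
    unfolding C1_def by (rule lower_bound[where \<psi>=\<psi> and L=L, OF p_pos q_pos psi_pos psi_decr dbl L r_ge n])
  have "\<exists>C2>0. \<forall>n::nat. n \<ge> 1 \<longrightarrow> best_nterm p (Fclass \<psi> q r :: (real^'d \<Rightarrow> complex) set) n
        \<le> ereal (C2 * \<psi> (real n powr (1 / real CARD('d))) * real n powr (1/p - 1/q))"
  proof (cases "q \<le> p")
    case True
    define C2 where "C2 = 3 powr (-(1/p-1/q)) * L^3"
    have "0 < C2" using L by (simp add: C2_def)
    moreover have "best_nterm p (Fclass \<psi> q r :: (real^'d \<Rightarrow> complex) set) n
        \<le> ereal (C2 * \<psi> (real n powr (1 / real CARD('d))) * real n powr (1/p - 1/q))" if n: "n \<ge> 1" for n
      unfolding C2_def by (rule upper_pgeq[where \<psi>=\<psi> and L=L, OF p_pos q_pos True psi_pos psi_decr dbl L r_ge n])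
    ultimately show ?thesis by blast
  next
    case False
    then have pq: "p < q" by simp
    obtain t0 K0 where t0: "t0 \<ge> 1" and conv: "convex_on {t0<..} (\<lambda>t. \<psi> t powr p)"
      and K0: "K0 > real CARD('d) * (1/p - 1/q)"
      and der: "\<forall>t>t0. \<exists>D. (\<psi> has_real_derivative D) (at t within {t..}) \<and> t * \<bar>D\<bar> / \<psi> t \<ge> K0"
      using extra[OF pq] by blast
    define \<beta> where "\<beta> = real CARD('d) * (1/p - 1/q)"
    have \<beta>: "0 < \<beta>" using p_pos pq by (simp add: \<beta>_def field_simps)
    define c' where "c' = p * (K0 + \<beta>) / 2"
    have c'0: "0 < c'" using K0 \<beta> p_pos by (simp add: c'_def \<beta>_def)
    have kb: "K0 + \<beta> < 2 * K0" using K0 by (simp add: \<beta>_def)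
    have c'1: "c' < p * K0" using mult_strict_left_mono[OF kb p_pos] by (simp add: c'_def)
    have H: "\<psi> y powr p * (1 + p * K0 * (y - x) / y) \<le> \<psi> x powr p" if "t0 < x" "x < y" for x y
      by (rule chord[where \<psi>=\<psi>, OF p_pos psi_pos psi_decr t0 conv der that])
    have dec0: "\<psi> (2 * x) powr p \<le> 2 powr (-c') * \<psi> x powr p" if "t0 < x" for x
      using decay[where \<psi>=\<psi> and p=p and c="p*K0", OF H _ c'0 c'1] t0 that by auto
    define s where "s = p * q / (q - p)"
    have s0: "0 < s" using p_pos pq by (simp add: s_def)
    define \<rho>' where "\<rho>' = 2 powr (- c' * s / p)"
    have \<rho>'0: "0 < \<rho>'" by (simp add: \<rho>'_def)
    have dec: "\<psi> (2 * x) powr s \<le> \<rho>' * \<psi> x powr s" if x: "t0 + 1 \<le> x" for x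
    proof -
      have x1: "1 \<le> x" "t0 < x" using x t0 by auto
      have x2: "1 \<le> 2 * x" using x1 by simp
      have "\<psi> (2 * x) powr s = (\<psi> (2 * x) powr p) powr (s / p)" using p_pos by (simp add: powr_powr)
      also have "\<dots> \<le> (2 powr (-c') * \<psi> x powr p) powr (s / p)"
        using dec0[OF x1(2)] s0 p_pos psi_pos[OF x2] by (intro powr_mono2) auto
      also have "\<dots> = \<rho>' * \<psi> x powr s"
        using p_pos psi_pos[OF x1(1)] by (simp add: \<rho>'_def powr_mult powr_powr)
      finally show ?thesis .
    qed
    have \<rho>: "2 ^ CARD('d) * \<rho>' < 1"
    proof -
      have bs: "\<beta> * s = real CARD('d)" using p_pos pq by (simp add: \<beta>_def s_def field_simps)
      have "real CARD('d) < c' * s / p"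
      proof -
        have "c' * s / p = (K0 + \<beta>) / 2 * s" using p_pos by (simp add: c'_def)
        moreover have "\<beta> * s < (K0 + \<beta>) / 2 * s" using K0 s0 by (intro mult_strict_right_mono) (auto simp: \<beta>_def)
        ultimately show ?thesis using bs by linarith
      qed
      then have "2 powr (real CARD('d) + (- c' * s / p)) < 2 powr 0" by (intro powr_less_mono) auto
      moreover have "2 ^ CARD('d) * \<rho>' = 2 powr (real CARD('d) + (- c' * s / p))"
        unfolding \<rho>'_def powr_add using powr_realpow[of 2 "CARD('d)"] by simp
      ultimately show ?thesis by simp
    qed
    obtain Ct where Ct: "Ct > 0" and tailC: "\<forall>M::nat. \<forall>F. finite F \<longrightarrow> F \<inter> (cube M :: (int^'d) set) = {} \<longrightarrow>
           (\<Sum>k\<in>F. \<psi> (kinf k) powr s) \<le> Ct * (real M + 1) ^ CARD('d) * \<psi> (real M + 1) powr s"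
      using tail[where \<psi>=\<psi> and s=s and \<rho>'=\<rho>' and T="t0+1", OF psi_pos psi_decr s0 \<rho>'0 \<rho> dec] t0 by auto
    define C2 where "C2 = 2 powr (1/p) * Ct powr (1/p-1/q) * L^2"
    have "0 < C2" using L Ct by (simp add: C2_def)
    moreover have "best_nterm p (Fclass \<psi> q r :: (real^'d \<Rightarrow> complex) set) n
        \<le> ereal (C2 * \<psi> (real n powr (1 / real CARD('d))) * real n powr (1/p - 1/q))" if n: "n \<ge> 1" for n
      unfolding C2_def
      by (rule upper_pltq[where \<psi>=\<psi> and L=L, OF p_pos pq psi_pos psi_decr dbl L r_ge n Ct]) (use tailC in \<open>auto simp: s_def\<close>)
    ultimately show ?thesis by blast
  qed
  then show ?thesis using C1 low by blast
qed


end
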